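(* Consider the one-cell system and a single particle in it (apart from particles injected from the baths). Let $\gamma$ be an admissible path and assume the particle starts at time $0$ from $\gamma(0)$ with velocity $v_0\neq0$ directed in the positive direction along $\gamma$ (i.e. along its first segment). Then, whatever the initial angular velocity of the disk, there exists a sequence of particles injected from the baths (drivers), each of which hits the disk once and leaves the cell again, such that the particle follows $\gamma$ to its end in a finite time. In particular, if $\gamma(1)\in\partial\Gamma_{\rm L}\cup\partial\Gamma_{\rm R}$, the particle leaves the cell in finite time.
   Context: Cell geometry. Let $\Gamma_{\rm box}\subset\mathbb{R}^2$ be a bounded connected closed domain such that $(x,y)\in\Gamma_{\rm box}$ implies $x\in[0,L]$. Its boundary is $\partial\Gamma_{\rm box}=\partial\Gamma_{\rm L}\cup\partial\Gamma_{\rm R}\cup\bigcup_{k=1}^b\partial\Gamma_k$, where $\partial\Gamma_{\rm L}=\{(0,y):y\in[-a,a]\}$ and $\partial\Gamma_{\rm R}=\{(L,y):y\in[-a,a]\}$ are the two "openings" ($a>0$), and each $\partial\Gamma_k$ is an arc of a circle $C_k$ with center $c_k$, the arcs being oriented so that $\partial\Gamma_{\rm box}$ is everywhere dispersing. In the interior of $\Gamma_{\rm box}$ lies a closed disk $D$ of center $c=(L/2,0)$ and radius $r$ with $\partial D\cap\partial\Gamma_{\rm box}=\emptyset$, and for every $z\in\partial\Gamma_{\rm box}$ the segment $[c,z]$ meets $\partial\Gamma_{\rm box}$ only at $z$. The cell is $\Gamma=\Gamma_{\rm box}\setminus D$; its corners $\partial\Gamma^*$ are the points where two boundary pieces meet.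 Dynamics. Particles move in straight lines inside $\Gamma$ and do not interact with each other. The disk has angular position $\phi$ and angular velocity $\omega$, $\dot\phi=\omega$. At $q\in\partial\Gamma$ write $v=v^{\rm n}e_{\rm n}+v^{\rm t}e_{\rm t}$ (outward normal, tangent). Rules: at the openings the particle leaves the cell; on $\partial\Gamma_{\rm box}\setminus(\partial\Gamma_{\rm L}\cup\partial\Gamma_{\rm R})$, $(v^{\rm n})'=-v^{\rm n}$, $(v^{\rm t})'=v^{\rm t}$; on $\partial D$, $(v^{\rm n})'=-v^{\rm n}$, $(v^{\rm t})'=\omega$, $\omega'=v^{\rm t}$. Heat baths. Particles may be injected at any time through $\partial\Gamma_{\rm L}$ or $\partial\Gamma_{\rm R}$ at any point and with any inward-pointing velocity. Admissible path. A curve $\gamma:[0,1]\to\Gamma$, continuous and piecewise differentiable on $(0,1)$, is admissible if: (1) it consists of finitely many straight segments meeting at $\partial\Gamma$; (2) at each meeting point on $\partial\Gamma_{\rm box}$ the incoming and outgoing angles are equal (specular reflection); (3) only $\gamma(0)$ and $\gamma(1)$ may lie in $\partial\Gamma_{\rm L}\cup\partial\Gamma_{\rm R}$; (4) $\gamma$ never meets a corner of $\partial\Gamma^*$; (5) $\gamma$ is nowhere tangent to $\partial D$. No reflection law is required at meeting points on $\partial D$. *)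

theory Defs
  imports "HOL-Analysis.Analysis"
begin

type_synonym pt = "real \<times> real"

text \<open>Data of a cell: width L, half-height a of the openings, radius r of the
rotating disk, number b of circular boundary arcs, the closed domain
Gamma_box, the arcs (indexed 1..b), and centres/radii of the supporting
circles C_k.\<close>

record cellgeom =
  Lw   :: real
  aw   :: real
  rd   :: real
  nb   :: nat
  box  :: "pt set"
  arc  :: "nat \<Rightarrow> pt set"
  ctr  :: "nat \<Rightarrow> pt"
  crad :: "nat \<Rightarrow> real"

definition openL :: "cellgeom \<Rightarrow> pt set" where
  "openL G = {(0, y) | y. - aw G \<le> y \<and> y \<le> aw G}"

definition openR :: "cellgeom \<Rightarrow> pt set" where
  "openR G = {(Lw G, y) | y. - aw G \<le> y \<and> y \<le> aw G}"

definition openings :: "cellgeom \<Rightarrow> pt set" where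
  "openings G = openL G \<union> openR G"

definition dctr :: "cellgeom \<Rightarrow> pt" where
  "dctr G = (Lw G / 2, 0)"

text \<open>The cell Gamma = Gamma_box minus the disk; the boundary circle of D is kept,
since particles collide with it.\<close>
definition cell :: "cellgeom \<Rightarrow> pt set" where
  "cell G = box G - ball (dctr G) (rd G)"

definition piece :: "cellgeom \<Rightarrow> nat \<Rightarrow> pt set" where
  "piece G k = (if k = 0 then openL G else if k = Suc (nb G) then openR G else arc G k)"

text \<open>Corners: points where two (distinct) boundary pieces meet.  (The disk
boundary is disjoint from the other pieces, so it contributes no corners.)\<close>
definition corners :: "cellgeom \<Rightarrow> pt set" where
  "corners G = {q. \<exists>i j. i \<le> Suc (nb G) \<and> j \<le> Suc (nb G) \<and> i \<noteq> j \<and>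
                         q \<in> piece G i \<and> q \<in> piece G j}"

definition cell_geometry :: "cellgeom \<Rightarrow> bool" where
  "cell_geometry G \<longleftrightarrow>
     Lw G > 0 \<and> aw G > 0 \<and> rd G > 0 \<and>
     bounded (box G) \<and> closed (box G) \<and> connected (box G) \<and>
     (\<forall>x y. (x, y) \<in> box G \<longrightarrow> 0 \<le> x \<and> x \<le> Lw G) \<and>
     frontier (box G) = openL G \<union> openR G \<union> (\<Union>k\<in>{1..nb G}. arc G k) \<and>
     (\<forall>k\<in>{1..nb G}.
        crad G k > 0 \<and> arc G k \<subseteq> sphere (ctr G k) (crad G k) \<and>
        compact (arc G k) \<and> connected (arc G k) \<and> infinite (arc G k) \<and>
        \<comment> \<open>dispersing: near the arc, Gamma_box lies outside the circle C_k\<close>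
        (\<forall>q\<in>arc G k. \<exists>e>0. ball q e \<inter> box G \<inter> ball (ctr G k) (crad G k) = {})) \<and>
     cball (dctr G) (rd G) \<subseteq> interior (box G) \<and>
     (\<forall>z\<in>frontier (box G). closed_segment (dctr G) z \<inter> frontier (box G) = {z})"

definition reflect :: "pt \<Rightarrow> pt \<Rightarrow> pt" where
  "reflect n u = u - (2 * (u \<bullet> n)) *\<^sub>R n"

definition admissible_path :: "cellgeom \<Rightarrow> (real \<Rightarrow> pt) \<Rightarrow> nat \<Rightarrow> (nat \<Rightarrow> real) \<Rightarrow> bool" where
  "admissible_path G \<gamma> m s \<longleftrightarrow>
     m \<ge> 1 \<and> s 0 = 0 \<and> s m = 1 \<and> (\<forall>i<m. s i < s (Suc i)) \<and>
     continuous_on {0..1} \<gamma> \<and> \<gamma> ` {0..1} \<subseteq> cell G \<and>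
     \<comment> \<open>(1) finitely many straight segments\<close>
     (\<forall>i<m. \<gamma> (s i) \<noteq> \<gamma> (s (Suc i)) \<and>
        \<gamma> differentiable_on {s i<..<s (Suc i)} \<and>
        (\<exists>lam. continuous_on {s i..s (Suc i)} lam \<and> strict_mono_on {s i..s (Suc i)} lam \<and>
             lam (s i) = 0 \<and> lam (s (Suc i)) = 1 \<and>
             (\<forall>t\<in>{s i..s (Suc i)}.
                \<gamma> t = (1 - lam t) *\<^sub>R \<gamma> (s i) + lam t *\<^sub>R \<gamma> (s (Suc i))))) \<and>
     \<comment> \<open>(1) the segments meet at the boundary of Gamma\<close>
     (\<forall>i. 0 < i \<and> i < m \<longrightarrow> \<gamma> (s i) \<in> frontier (box G) \<union> sphere (dctr G) (rd G)) \<and>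
     \<comment> \<open>(2) specular reflection at meeting points on the boundary of Gamma_box\<close>
     (\<forall>i k. 0 < i \<and> i < m \<and> k \<in> {1..nb G} \<and> \<gamma> (s i) \<in> arc G k \<longrightarrow>
        sgn (\<gamma> (s (Suc i)) - \<gamma> (s i)) =
        reflect ((1 / crad G k) *\<^sub>R (\<gamma> (s i) - ctr G k)) (sgn (\<gamma> (s i) - \<gamma> (s (i - 1))))) \<and>
     \<comment> \<open>(3) only the endpoints may lie in the openings\<close>
     (\<forall>t\<in>{0<..<1}. \<gamma> t \<notin> openings G) \<and>
     \<comment> \<open>(4) no corners\<close>
     (\<forall>t\<in>{0..1}. \<gamma> t \<notin> corners G) \<and>
     \<comment> \<open>(5) nowhere tangent to the boundary of D\<close>
     (\<forall>i<m. \<forall>t\<in>{s i..s (Suc i)}. \<gamma> t \<in> sphere (dctr G) (rd G) \<longrightarrow>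
        (\<gamma> (s (Suc i)) - \<gamma> (s i)) \<bullet> (\<gamma> t - dctr G) \<noteq> 0)"

text \<open>A particle trajectory: it is present in the cell during [t_in, t_out];
pos/vel are position and (right-continuous) velocity; jumps is the finite set
of collision times, djumps those which are collisions with the disk.\<close>

record ptraj =
  t_in   :: real
  t_out  :: real
  pos    :: "real \<Rightarrow> pt"
  vel    :: "real \<Rightarrow> pt"
  jumps  :: "real set"
  djumps :: "real set"

definition rot90 :: "pt \<Rightarrow> pt" where
  "rot90 w = (- snd w, fst w)"

text \<open>outward normal of Gamma at a point q of the disk boundary (points into D)
and the tangent vector (counterclockwise direction of rotation of the disk)\<close>
definition disk_en :: "cellgeom \<Rightarrow> pt \<Rightarrow> pt" where
  "disk_en G q = (1 / rd G) *\<^sub>R (dctr G - q)"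

definition disk_et :: "cellgeom \<Rightarrow> pt \<Rightarrow> pt" where
  "disk_et G q = rot90 ((1 / rd G) *\<^sub>R (q - dctr G))"

definition left_val :: "(real \<Rightarrow> 'a) \<Rightarrow> real \<Rightarrow> 'a \<Rightarrow> bool" where
  "left_val f \<tau> w \<longleftrightarrow> (\<exists>e>0. \<forall>u\<in>{\<tau> - e<..<\<tau>}. f u = w)"

definition wall_rule :: "cellgeom \<Rightarrow> pt \<Rightarrow> pt \<Rightarrow> pt \<Rightarrow> bool" where
  "wall_rule G q vm vp \<longleftrightarrow>
     q \<notin> corners G \<and>
     (\<exists>k\<in>{1..nb G}. q \<in> arc G k \<and>
        (let n = (1 / crad G k) *\<^sub>R (ctr G k - q) in vm \<bullet> n > 0 \<and> vp = reflect n vm))"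

definition disk_rule :: "cellgeom \<Rightarrow> pt \<Rightarrow> pt \<Rightarrow> pt \<Rightarrow> real \<Rightarrow> real \<Rightarrow> bool" where
  "disk_rule G q vm vp wm wp \<longleftrightarrow>
     q \<in> sphere (dctr G) (rd G) \<and>
     vm \<bullet> disk_en G q > 0 \<and>
     vp = (- (vm \<bullet> disk_en G q)) *\<^sub>R disk_en G q + wm *\<^sub>R disk_et G q \<and>
     wp = vm \<bullet> disk_et G q"

definition traj_ok :: "cellgeom \<Rightarrow> real \<Rightarrow> (real \<Rightarrow> real) \<Rightarrow> ptraj \<Rightarrow> bool" where
  "traj_ok G T \<omega> P \<longleftrightarrow>
     0 \<le> t_in P \<and> t_in P \<le> t_out P \<and> t_out P \<le> T \<and>
     finite (jumps P) \<and> jumps P \<subseteq> {t_in P<..<t_out P} \<and> djumps P \<subseteq> jumps P \<and>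
     (\<forall>t\<in>{t_in P..t_out P}. pos P t \<in> cell G) \<and>
     \<comment> \<open>free flight between collisions\<close>
     (\<forall>s t. t_in P \<le> s \<and> s \<le> t \<and> t \<le> t_out P \<and> jumps P \<inter> {s<..<t} = {} \<longrightarrow>
        pos P t = pos P s + (t - s) *\<^sub>R vel P s) \<and>
     (\<forall>s t. t_in P \<le> s \<and> s \<le> t \<and> t < t_out P \<and> jumps P \<inter> {s<..t} = {} \<longrightarrow>
        vel P t = vel P s) \<and>
     \<comment> \<open>collisions\<close>
     (\<forall>\<tau>\<in>jumps P - djumps P. \<exists>vm. left_val (vel P) \<tau> vm \<and>
        wall_rule G (pos P \<tau>) vm (vel P \<tau>)) \<and>
     (\<forall>\<tau>\<in>djumps P. \<exists>vm wm. left_val (vel P) \<tau> vm \<and> left_val \<omega> \<tau> wm \<and>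
        disk_rule G (pos P \<tau>) vm (vel P \<tau>) wm (\<omega> \<tau>)) \<and>
     \<comment> \<open>leaving the cell through an opening\<close>
     (t_out P < T \<longrightarrow> t_in P < t_out P \<and>
        (\<exists>vm. left_val (vel P) (t_out P) vm \<and>
           ((pos P (t_out P) \<in> openL G \<and> fst vm < 0) \<or>
            (pos P (t_out P) \<in> openR G \<and> fst vm > 0))))"

definition injected :: "cellgeom \<Rightarrow> ptraj \<Rightarrow> bool" where
  "injected G P \<longleftrightarrow>
     (pos P (t_in P) \<in> openL G \<and> fst (vel P (t_in P)) > 0) \<or>
     (pos P (t_in P) \<in> openR G \<and> fst (vel P (t_in P)) < 0)"

definition driver :: "cellgeom \<Rightarrow> real \<Rightarrow> ptraj \<Rightarrow> bool" where
  "driver G T P \<longleftrightarrow> injected G P \<and> card (djumps P) = 1 \<and> t_out P < T"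

definition evolution ::
  "cellgeom \<Rightarrow> real \<Rightarrow> (real \<Rightarrow> real) \<Rightarrow> ptraj \<Rightarrow> ptraj list \<Rightarrow> bool" where
  "evolution G T \<omega> P0 Ds \<longleftrightarrow>
     traj_ok G T \<omega> P0 \<and> (\<forall>D\<in>set Ds. traj_ok G T \<omega> D \<and> injected G D) \<and>
     (let Ps = P0 # Ds in
        (\<forall>i<length Ps. \<forall>j<length Ps. i \<noteq> j \<longrightarrow> djumps (Ps ! i) \<inter> djumps (Ps ! j) = {}) \<and>
        (\<forall>s t. 0 \<le> s \<and> s \<le> t \<and> t \<le> T \<and>
           (\<Union>P\<in>set Ps. djumps P) \<inter> {s<..t} = {} \<longrightarrow> \<omega> t = \<omega> s))"

definition follows :: "ptraj \<Rightarrow> (real \<Rightarrow> pt) \<Rightarrow> real \<Rightarrow> bool" where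
  "follows P \<gamma> Tf \<longleftrightarrow>
     0 \<le> Tf \<and> Tf \<le> t_out P \<and>
     (\<exists>\<sigma>. continuous_on {0..Tf} \<sigma> \<and> mono_on {0..Tf} \<sigma> \<and> \<sigma> 0 = 0 \<and> \<sigma> Tf = 1 \<and>
          (\<forall>t\<in>{0..Tf}. pos P t = \<gamma> (\<sigma> t)))"

end

theory Submission imports Defs begin

lemma inv_param:
  fixes lam :: "real \<Rightarrow> real"
  assumes c: "continuous_on {a..b} lam" and sm: "strict_mono_on {a..b} lam"
    and l0: "lam a = 0" and l1: "lam b = 1" and ab: "a < b"
  shows "\<exists>\<mu>. continuous_on {0..1} \<mu> \<and> (\<forall>y\<in>{0..1}. \<mu> y \<in> {a..b} \<and> lam (\<mu> y) = y)
            \<and> mono_on {0..1} \<mu> \<and> \<mu> 0 = a \<and> \<mu> 1 = b"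
proof -
  have inj: "inj_on lam {a..b}" using sm by (rule strict_mono_on_imp_inj_on)
  have img: "lam ` {a..b} = {0..1}"
  proof
    show "lam ` {a..b} \<subseteq> {0..1}"
    proof
      fix y assume "y \<in> lam ` {a..b}"
      then obtain x where x: "x \<in> {a..b}" "y = lam x" by auto
      have "lam a \<le> lam x"
        using sm x ab unfolding strict_mono_on_def by (smt (verit) atLeastAtMost_iff)
      moreover have "lam x \<le> lam b"
        using sm x ab unfolding strict_mono_on_def by (smt (verit) atLeastAtMost_iff)
      ultimately show "y \<in> {0..1}" using x l0 l1 by auto
    qed
  next
    show "{0..1} \<subseteq> lam ` {a..b}"
    proof
      fix y :: real assume "y \<in> {0..1}"
      then obtain x where "x \<ge> a" "x \<le> b" "lam x = y"
        using IVT'[of lam a y b] c l0 l1 ab by auto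
      then show "y \<in> lam ` {a..b}" by auto
    qed
  qed
  define \<mu> where "\<mu> = inv_into {a..b} lam"
  have inv1: "\<forall>x\<in>{a..b}. \<mu> (lam x) = x" using inj by (simp add: \<mu>_def)
  have cont: "continuous_on {0..1} \<mu>"
    using continuous_on_inv[OF c compact_Icc inv1] img by simp
  have mem: "\<forall>y\<in>{0..1}. \<mu> y \<in> {a..b} \<and> lam (\<mu> y) = y"
  proof
    fix y :: real assume y: "y \<in> {0..1}"
    then have "y \<in> lam ` {a..b}" using img by simp
    then show "\<mu> y \<in> {a..b} \<and> lam (\<mu> y) = y"
      unfolding \<mu>_def by (meson inv_into_into f_inv_into_f)
  qed
  have mono: "mono_on {0..1} \<mu>"
  proof (rule mono_onI)
    fix x y :: real assume xy: "x \<in> {0..1}" "y \<in> {0..1}" "x \<le> y"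
    show "\<mu> x \<le> \<mu> y"
    proof (rule ccontr)
      assume "\<not> \<mu> x \<le> \<mu> y"
      then have "\<mu> y < \<mu> x" by simp
      moreover have "\<mu> y \<in> {a..b}" "\<mu> x \<in> {a..b}" using mem xy by auto
      ultimately have "lam (\<mu> y) < lam (\<mu> x)" using sm unfolding strict_mono_on_def by blast
      then show False using mem xy by auto
    qed
  qed
  have "\<mu> 0 = a" using inv1 l0 ab by (metis atLeastAtMost_iff order_less_imp_le order_refl)
  moreover have "\<mu> 1 = b" using inv1 l1 ab by (metis atLeastAtMost_iff order_less_imp_le order_refl)
  ultimately show ?thesis using cont mem mono by blast
qed

lemma cg_basic:
  assumes "cell_geometry G"
  shows "Lw G > 0" "aw G > 0" "rd G > 0" "closed (box G)"
    "frontier (box G) \<subseteq> box G" "openL G \<subseteq> frontier (box G)" "openR G \<subseteq> frontier (box G)"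
    "cball (dctr G) (rd G) \<subseteq> interior (box G)"
    "\<And>x y. (x, y) \<in> box G \<Longrightarrow> 0 \<le> x \<and> x \<le> Lw G"
proof -
  note D = assms[unfolded cell_geometry_def]
  have cl: "closed (box G)" using D by (elim conjE) assumption
  have fr: "frontier (box G) = openL G \<union> openR G \<union> (\<Union>k\<in>{1..nb G}. arc G k)"
    using D by (elim conjE) assumption
  show "Lw G > 0" using D by (elim conjE) assumption
  show "aw G > 0" using D by (elim conjE) assumption
  show "rd G > 0" using D by (elim conjE) assumption
  show "closed (box G)" by (fact cl)
  show "cball (dctr G) (rd G) \<subseteq> interior (box G)" using D by (elim conjE) assumption
  show "\<And>x y. (x, y) \<in> box G \<Longrightarrow> 0 \<le> x \<and> x \<le> Lw G"
    using D by (elim conjE) blast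
  show "frontier (box G) \<subseteq> box G" using cl by (simp add: frontier_subset_closed)
  show "openL G \<subseteq> frontier (box G)" "openR G \<subseteq> frontier (box G)" using fr by auto
qed

lemma x0_pos:
  assumes "cell_geometry G"
  shows "Lw G / 2 - rd G > 0"
proof -
  have "(Lw G / 2 - rd G, 0) \<in> cball (dctr G) (rd G)"
    using cg_basic[OF assms] by (simp add: dctr_def dist_Pair_Pair)
  then have "(Lw G / 2 - rd G, 0) \<in> interior (box G)" using cg_basic[OF assms] by auto
  then obtain e where e: "e > 0" "ball (Lw G / 2 - rd G, 0) e \<subseteq> box G"
    by (meson mem_interior)
  have "(Lw G / 2 - rd G - e/2, 0) \<in> ball (Lw G / 2 - rd G, 0) e"
    using e by (simp add: dist_Pair_Pair)
  then have "(Lw G / 2 - rd G - e/2, 0) \<in> box G" using e by auto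
  then have "0 \<le> Lw G / 2 - rd G - e/2" using cg_basic(9)[OF assms] by blast
  then show ?thesis using e by simp
qed

lemma seg_in_box:
  assumes cg: "cell_geometry G" and z: "z \<in> frontier (box G)"
  shows "closed_segment (dctr G) z \<subseteq> box G"
proof
  let ?c = "dctr G"
  have star: "closed_segment ?c z \<inter> frontier (box G) = {z}"
  proof -
    have "\<forall>z\<in>frontier (box G). closed_segment (dctr G) z \<inter> frontier (box G) = {z}"
      using cg unfolding cell_geometry_def by (elim conjE) assumption
    then show ?thesis using z by blast
  qed
  have cin: "?c \<in> interior (box G)" using cg_basic(3,8)[OF cg] by auto
  have zc: "z \<noteq> ?c" using cin z by (auto simp: frontier_def)
  fix p assume p: "p \<in> closed_segment ?c z"
  then obtain u where u: "0 \<le> u" "u \<le> 1" "p = (1 - u) *\<^sub>R ?c + u *\<^sub>R z"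
    by (auto simp: in_segment)
  show "p \<in> box G"
  proof (cases "u = 1")
    case True then show ?thesis using u z cg_basic(5)[OF cg] by auto
  next
    case False
    then have u1: "u < 1" using u by simp
    show ?thesis
    proof (rule ccontr)
      assume pn: "p \<notin> box G"
      have "closed_segment ?c p \<inter> frontier (box G) \<noteq> {}"
      proof (rule connected_Int_frontier)
        show "connected (closed_segment ?c p)" by simp
        show "closed_segment ?c p \<inter> box G \<noteq> {}" using cin interior_subset by auto
        show "closed_segment ?c p - box G \<noteq> {}" using pn by auto
      qed
      then obtain w where w: "w \<in> closed_segment ?c p" "w \<in> frontier (box G)" by auto
      have "closed_segment ?c p \<subseteq> closed_segment ?c z"
        using p by (simp add: subset_closed_segment)
      then have "w = z" using w star by auto
      then obtain v where v: "0 \<le> v" "v \<le> 1" "z = (1 - v) *\<^sub>R ?c + v *\<^sub>R p"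
        using w by (auto simp: in_segment)
      have "z - ?c = (v * u) *\<^sub>R (z - ?c)"
        using v u by (simp add: algebra_simps)
      then have "(1 - v * u) *\<^sub>R (z - ?c) = 0" by (simp add: algebra_simps)
      then have "v * u = 1" using zc by simp
      moreover have "v * u \<le> u" using v u by (simp add: mult_left_le_one_le)
      ultimately show False using u1 by simp
    qed
  qed
qed

lemma cone_in_cell:
  assumes cg: "cell_geometry G" and th: "0 \<le> \<theta>" "\<theta> \<le> 1" and y: "\<bar>y\<bar> \<le> aw G"
  shows "((1 - \<theta>) * (Lw G / 2 - rd G), \<theta> * y) \<in> cell G"
proof -
  let ?L = "Lw G" and ?r = "rd G" and ?a = "aw G"
  define x0 where "x0 = ?L / 2 - ?r"
  have x0: "x0 > 0" using x0_pos[OF cg] by (simp add: x0_def)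
  have L: "?L > 0" "?r > 0" "?a > 0" using cg_basic[OF cg] by auto
  define \<rho> where "\<rho> = 1 - (1 - \<theta>) * (2 * x0 / ?L)"
  have q: "2 * x0 / ?L = 1 - 2 * ?r / ?L" using L by (simp add: x0_def diff_divide_distrib)
  have rt: "\<rho> - \<theta> = (1 - \<theta>) * (2 * ?r / ?L)"
    unfolding \<rho>_def q by (simp add: algebra_simps)
  have rpos: "\<rho> > 0"
  proof (cases "\<theta> = 1")
    case True then show ?thesis by (simp add: \<rho>_def)
  next
    case False
    then have "(1 - \<theta>) * (2 * ?r / ?L) > 0" using th L by simp
    then show ?thesis using rt th by linarith
  qed
  have "(1 - \<theta>) * (2 * ?r / ?L) \<ge> 0" using th L by simp
  then have rge: "\<rho> \<ge> \<theta>" using rt by linarith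
  have r1: "\<rho> \<le> 1" using th x0 L by (simp add: \<rho>_def)
  define y' where "y' = \<theta> * y / \<rho>"
  have "\<bar>\<theta> * y\<bar> \<le> \<rho> * ?a"
  proof -
    have "\<bar>\<theta> * y\<bar> = \<theta> * \<bar>y\<bar>" using th by (simp add: abs_mult)
    also have "\<dots> \<le> \<theta> * ?a" using th y by (simp add: mult_left_mono)
    also have "\<dots> \<le> \<rho> * ?a" using rge L by (simp add: mult_right_mono)
    finally show ?thesis .
  qed
  then have y': "\<bar>y'\<bar> \<le> ?a" using rpos
    by (simp add: y'_def abs_divide pos_divide_le_eq mult.commute)
  have zL: "(0, y') \<in> openL G" using y' by (auto simp: openL_def)
  then have zf: "(0, y') \<in> frontier (box G)" using cg_basic(6)[OF cg] by auto
  have eq: "((1 - \<theta>) * x0, \<theta> * y) = (1 - \<rho>) *\<^sub>R dctr G + \<rho> *\<^sub>R (0, y')"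
  proof -
    have e1: "(1 - \<rho>) * (?L / 2) = (1 - \<theta>) * x0" using L by (simp add: \<rho>_def)
    have e2: "\<rho> * y' = \<theta> * y" using rpos by (simp add: y'_def)
    show ?thesis using e1 e2 by (simp add: dctr_def prod_eq_iff)
  qed
  have "((1 - \<theta>) * x0, \<theta> * y) \<in> closed_segment (dctr G) (0, y')"
    unfolding eq in_segment using rpos r1 by (intro exI[of _ \<rho>]) auto
  then have inb: "((1 - \<theta>) * x0, \<theta> * y) \<in> box G" using seg_in_box[OF cg zf] by auto
  have "dist (dctr G) ((1 - \<theta>) * x0, \<theta> * y) \<ge> ?r"
  proof -
    have "\<bar>?L/2 - (1 - \<theta>) * x0\<bar> \<ge> ?r"
    proof -
      have "(1 - \<theta>) * x0 \<le> x0" using th x0 by (simp add: mult_left_le_one_le)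
      moreover have "(1 - \<theta>) * x0 \<ge> 0" using th x0 by simp
      ultimately show ?thesis unfolding x0_def by linarith
    qed
    moreover have "dist (dctr G) ((1 - \<theta>) * x0, \<theta> * y) \<ge> \<bar>?L/2 - (1 - \<theta>) * x0\<bar>"
      unfolding dctr_def dist_Pair_Pair dist_real_def power2_abs by (rule real_sqrt_ge_abs1)
    ultimately show ?thesis by linarith
  qed
  then show ?thesis using inb unfolding cell_def x0_def by auto
qed

lemma driver_exists:
  assumes cg: "cell_geometry G" and d: "0 < \<delta>" "\<delta> < T"
    and lv: "left_val \<omega> \<delta> pw" and wd: "\<omega> \<delta> = w"
  shows "\<exists>D. traj_ok G T \<omega> D \<and> injected G D \<and> driver G T D \<and> djumps D = {\<delta>}"
proof -
  let ?L = "Lw G" and ?r = "rd G" and ?a = "aw G"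
  define x0 where "x0 = ?L / 2 - ?r"
  have x0: "x0 > 0" using x0_pos[OF cg] by (simp add: x0_def)
  have L: "?L > 0" "?r > 0" "?a > 0" using cg_basic[OF cg] by auto
  define l where "l = (\<bar>w\<bar> + \<bar>pw\<bar> + 1) / ?a + 1 / \<delta> + 1 / (T - \<delta>)"
  have l1: "(\<bar>w\<bar> + \<bar>pw\<bar> + 1) / ?a > 0" using L by simp
  have l2: "1 / \<delta> > 0" "1 / (T - \<delta>) > 0" using d by auto
  have lpos: "l > 0" unfolding l_def using l1 l2 by linarith
  have "l > 1 / \<delta>" unfolding l_def using l1 l2 by linarith
  then have il1: "1 / l < \<delta>" using lpos d by (simp add: field_simps)
  have "l > 1 / (T - \<delta>)" unfolding l_def using l1 l2 by linarith
  then have il2: "1 / l < T - \<delta>" using lpos d by (simp add: field_simps)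
  have "l \<ge> (\<bar>w\<bar> + \<bar>pw\<bar> + 1) / ?a" unfolding l_def using l2 by linarith
  then have la: "l * ?a \<ge> \<bar>w\<bar> + \<bar>pw\<bar> + 1" using L by (simp add: field_simps)
  define y0 where "y0 = w / l"
  define y1 where "y1 = - pw / l"
  have y0: "\<bar>y0\<bar> \<le> ?a" using la lpos by (simp add: y0_def abs_divide pos_divide_le_eq mult.commute)
  have y1: "\<bar>y1\<bar> \<le> ?a" using la lpos by (simp add: y1_def abs_divide pos_divide_le_eq mult.commute)
  define ti where "ti = \<delta> - 1 / l"
  define to where "to = \<delta> + 1 / l"
  define vin :: pt where "vin = (l * x0, - w)"
  define vout :: pt where "vout = (- l * x0, - pw)"
  define q :: pt where "q = (x0, 0)"
  define p :: "real \<Rightarrow> pt" where "p t = (if t < \<delta> then (0, y0) + (t - ti) *\<^sub>R vin else q + (t - \<delta>) *\<^sub>R vout)" for t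
  define v :: "real \<Rightarrow> pt" where "v t = (if t < \<delta> then vin else vout)" for t
  define D where "D = \<lparr>t_in = ti, t_out = to, pos = p, vel = v, jumps = {\<delta>}, djumps = {\<delta>}\<rparr>"
  have tid: "ti < \<delta>" "\<delta> < to" using lpos by (auto simp: ti_def to_def)
  have ti0: "0 \<le> ti" using il1 by (simp add: ti_def)
  have toT: "to < T" using il2 by (simp add: to_def)
  have pin: "p t = ((1 - (1 - l * (t - ti))) * x0, (1 - l * (t - ti)) * y0)" if "t < \<delta>" for t
    using that lpos by (simp add: p_def vin_def y0_def algebra_simps)
  have pout: "p t = ((1 - l * (t - \<delta>)) * x0, (l * (t - \<delta>)) * y1)" if "\<delta> \<le> t" for t
    using that lpos by (simp add: p_def vout_def q_def y1_def algebra_simps)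
  have pdelta: "(0, y0) + (\<delta> - ti) *\<^sub>R vin = q"
    using lpos by (simp add: ti_def vin_def q_def y0_def)
  have incell: "p t \<in> cell G" if "ti \<le> t" "t \<le> to" for t
  proof (cases "t < \<delta>")
    case True
    have a1: "l * (t - ti) \<ge> 0" using that lpos by simp
    have "l * (t - ti) \<le> l * (\<delta> - ti)" using True lpos by (simp add: mult_left_mono)
    moreover have "l * (\<delta> - ti) = 1" using lpos by (simp add: ti_def)
    ultimately have "0 \<le> 1 - l * (t - ti)" "1 - l * (t - ti) \<le> 1" using a1 by linarith+
    then show ?thesis using pin[OF True] cone_in_cell[OF cg _ _ y0, of "1 - l * (t - ti)"] unfolding x0_def by simp
  next
    case False
    have a1: "0 \<le> l * (t - \<delta>)" using False lpos by simp
    have "l * (t - \<delta>) \<le> l * (to - \<delta>)" using that lpos by (simp add: mult_left_mono)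
    moreover have "l * (to - \<delta>) = 1" using lpos by (simp add: to_def)
    ultimately have "0 \<le> l * (t - \<delta>)" "l * (t - \<delta>) \<le> 1" using a1 by linarith+
    then show ?thesis using pout False cone_in_cell[OF cg _ _ y1] unfolding x0_def by auto
  qed
  have ff1: "p t = p s + (t - s) *\<^sub>R v s"
    if h: "ti \<le> s" "s \<le> t" "t \<le> to" "{\<delta>} \<inter> {s<..<t} = {}" for s t
  proof -
    have "\<not> (s < \<delta> \<and> \<delta> < t)" using h(4) by auto
    then consider "t < \<delta>" | "\<delta> \<le> s" | "s < \<delta> \<and> t = \<delta>" using h by fastforce
    then show ?thesis
    proof cases
      case 1 then show ?thesis using h by (simp add: p_def v_def algebra_simps)
    next
      case 2 then show ?thesis using h by (simp add: p_def v_def algebra_simps)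
    next
      case 3
      then have "p t = q" using pdelta by (simp add: p_def)
      also have "q = (0, y0) + (s - ti) *\<^sub>R vin + (t - s) *\<^sub>R vin"
      proof -
        have "(s - ti) *\<^sub>R vin + (t - s) *\<^sub>R vin = (\<delta> - ti) *\<^sub>R vin"
          using 3 by (simp flip: scaleR_add_left)
        then show ?thesis using pdelta by (simp add: add.assoc)
      qed
      finally show ?thesis using 3 by (simp add: p_def v_def)
    qed
  qed
  have ff2: "v t = v s"
    if "ti \<le> s" "s \<le> t" "t < to" "{\<delta>} \<inter> {s<..t} = {}" for s t
    using that by (auto simp: v_def)
  have lvin: "left_val v \<delta> vin"
    unfolding left_val_def using tid by (intro exI[of _ "\<delta> - ti"]) (auto simp: v_def)
  have lvout: "left_val v to vout"
    unfolding left_val_def using tid by (intro exI[of _ "to - \<delta>"]) (auto simp: v_def)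
  have en: "disk_en G q = (1, 0)" using L by (simp add: disk_en_def dctr_def q_def x0_def)
  have et: "disk_et G q = (0, -1)" using L by (simp add: disk_et_def rot90_def dctr_def q_def x0_def)
  have dr: "disk_rule G q vin vout pw w"
    unfolding disk_rule_def en et using L x0 lpos
    by (simp add: q_def x0_def dctr_def dist_Pair_Pair vin_def vout_def)
  have pq: "p \<delta> = q" by (simp add: p_def q_def)
  have pto: "p to = (0, y1)" using pout[of to] tid lpos by (simp add: to_def)
  have oL: "(0, y1) \<in> openL G" "(0, y0) \<in> openL G" using y1 y0 by (auto simp: openL_def)
  have pti: "p ti = (0, y0)" using tid by (simp add: p_def)
  have tr: "traj_ok G T \<omega> D"
    unfolding traj_ok_def D_def ptraj.simps
  proof (intro conjI)
    show "0 \<le> ti" "ti \<le> to" "to \<le> T" "finite {\<delta>}" "{\<delta>} \<subseteq> {ti<..<to}" "{\<delta>} \<subseteq> {\<delta>}"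
      using ti0 tid toT by auto
    show "\<forall>t\<in>{ti..to}. p t \<in> cell G" using incell by auto
    show "\<forall>s t. ti \<le> s \<and> s \<le> t \<and> t \<le> to \<and> {\<delta>} \<inter> {s<..<t} = {} \<longrightarrow> p t = p s + (t - s) *\<^sub>R v s"
      using ff1 by blast
    show "\<forall>s t. ti \<le> s \<and> s \<le> t \<and> t < to \<and> {\<delta>} \<inter> {s<..t} = {} \<longrightarrow> v t = v s"
      using ff2 by blast
    show "\<forall>\<tau>\<in>{\<delta>} - {\<delta>}. \<exists>vm. left_val v \<tau> vm \<and> wall_rule G (p \<tau>) vm (v \<tau>)" by simp
    have "v \<delta> = vout" by (simp add: v_def)
    then show "\<forall>\<tau>\<in>{\<delta>}. \<exists>vm wm. left_val v \<tau> vm \<and> left_val \<omega> \<tau> wm \<and> disk_rule G (p \<tau>) vm (v \<tau>) wm (\<omega> \<tau>)"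
      using lvin lv dr pq wd by (metis singletonD)
    have "fst vout < 0" using x0 lpos by (simp add: vout_def)
    then show "to < T \<longrightarrow> ti < to \<and> (\<exists>vm. left_val v to vm \<and> (p to \<in> openL G \<and> fst vm < 0 \<or> p to \<in> openR G \<and> 0 < fst vm))"
      using tid lvout pto oL by (metis less_trans)
  qed
  have inj: "injected G D"
    unfolding injected_def D_def ptraj.simps using pti oL tid x0 lpos by (simp add: v_def vin_def)
  have "driver G T D" unfolding driver_def using inj toT by (simp add: D_def)
  then show ?thesis using tr inj by (auto simp: D_def)
qed

lemma cnt_eq:
  fixes f :: "nat \<Rightarrow> real"
  assumes sm: "strict_mono f" and k: "k < m" and lo: "k = 0 \<or> f k \<le> t" and hi: "Suc k = m \<or> t < f (Suc k)"
  shows "card {j\<in>{1..<m}. f j \<le> t} = k"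
proof -
  have "{j\<in>{1..<m}. f j \<le> t} = {1..k}"
  proof
    show "{j\<in>{1..<m}. f j \<le> t} \<subseteq> {1..k}"
    proof
      fix j assume j: "j \<in> {j\<in>{1..<m}. f j \<le> t}"
      have "j \<le> k"
      proof (rule ccontr)
        assume "\<not> j \<le> k"
        then have "Suc k \<le> j" by simp
        then have "f (Suc k) \<le> f j" "Suc k \<noteq> m" using sm j by (auto simp: strict_mono_less_eq)
        then show False using hi j by auto
      qed
      then show "j \<in> {1..k}" using j by auto
    qed
  next
    show "{1..k} \<subseteq> {j\<in>{1..<m}. f j \<le> t}"
    proof
      fix j assume j: "j \<in> {1..k}"
      then have "f j \<le> f k" using sm by (simp add: strict_mono_less_eq)
      then show "j \<in> {j\<in>{1..<m}. f j \<le> t}" using j lo k by auto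
    qed
  qed
  then show ?thesis by simp
qed

lemma cnt_mono:
  fixes f :: "nat \<Rightarrow> real"
  assumes "s \<le> t"
  shows "card {j\<in>{1..<m}. f j \<le> s} \<le> card {j\<in>{1..<m}. f j \<le> t}"
  by (rule card_mono) (use assms in auto)

lemma ball_escape:
  fixes q c u :: pt
  assumes dq: "dist c q = r" and D: "u \<bullet> (q - c) > 0" and e: "e > 0"
  shows "\<exists>h. 0 < h \<and> h \<le> 1 \<and> h * norm u < e \<and> q - h *\<^sub>R u \<in> ball c r"
proof -
  let ?D = "u \<bullet> (q - c)"
  have un: "u \<noteq> 0" using D by auto
  then have nu: "norm u > 0" by simp
  define h where "h = min 1 (min (?D / (norm u)\<^sup>2) (e / (2 * norm u)))"
  have hpos: "h > 0" using D nu e by (simp add: h_def)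
  have h1: "h \<le> 1" by (simp add: h_def)
  have h2: "h * (norm u)\<^sup>2 \<le> ?D"
  proof -
    have "h \<le> ?D / (norm u)\<^sup>2" by (simp add: h_def)
    then show ?thesis using nu by (simp add: pos_le_divide_eq)
  qed
  have h3: "h * norm u < e"
  proof -
    have "h \<le> e / (2 * norm u)" by (simp add: h_def)
    then have "h * norm u \<le> e / 2" using nu by (simp add: pos_le_divide_eq field_simps)
    then show ?thesis using e by simp
  qed
  have "(norm ((q - c) - h *\<^sub>R u))\<^sup>2 = (norm (q - c))\<^sup>2 - 2 * h * ?D + h * (h * (norm u)\<^sup>2)"
    by (simp add: power2_norm_eq_inner inner_diff_left inner_diff_right inner_commute algebra_simps)
  also have "\<dots> \<le> (norm (q - c))\<^sup>2 - 2 * h * ?D + h * ?D"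
    using h2 hpos by (simp add: mult_left_mono)
  also have "\<dots> < (norm (q - c))\<^sup>2" using hpos D by simp
  finally have "norm ((q - c) - h *\<^sub>R u) < norm (q - c)"
    by (rule power2_less_imp_less) simp
  moreover have "norm (q - c) = r" using dq by (simp add: dist_norm norm_minus_commute)
  moreover have "dist c (q - h *\<^sub>R u) = norm ((q - c) - h *\<^sub>R u)"
    by (simp add: dist_norm norm_minus_commute algebra_simps)
  ultimately have "q - h *\<^sub>R u \<in> ball c r" by simp
  then show ?thesis using hpos h1 h3 by blast
qed

lemma disk_decomp:
  fixes x :: pt
  assumes "dist (dctr G) q = rd G" "rd G > 0"
  shows "x = (x \<bullet> disk_en G q) *\<^sub>R disk_en G q + (x \<bullet> disk_et G q) *\<^sub>R disk_et G q"
proof -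
  obtain c1 c2 where c: "dctr G = (c1, c2)" by (cases "dctr G")
  obtain q1 q2 where q: "q = (q1, q2)" by (cases q)
  obtain x1 x2 where x: "x = (x1, x2)" by (cases x)
  let ?r = "rd G"
  have "sqrt ((c1 - q1)\<^sup>2 + (c2 - q2)\<^sup>2) = ?r" using assms(1) by (simp add: c q dist_Pair_Pair dist_real_def)
  then have "(c1 - q1)\<^sup>2 + (c2 - q2)\<^sup>2 = ?r\<^sup>2" using assms(2)
    by (metis real_sqrt_eq_iff real_sqrt_unique add_nonneg_nonneg zero_le_power2 less_imp_le)
  then have n1: "((c1 - q1) / ?r)\<^sup>2 + ((c2 - q2) / ?r)\<^sup>2 = 1" using assms(2)
    by (simp add: power_divide add_divide_distrib[symmetric])
  define a where "a = (c1 - q1) / ?r"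
  define b where "b = (c2 - q2) / ?r"
  have ab: "a\<^sup>2 + b\<^sup>2 = 1" using n1 by (simp add: a_def b_def)
  have en: "disk_en G q = (a, b)" by (simp add: disk_en_def c q a_def b_def)
  have et: "disk_et G q = (b, - a)"
    using assms(2) by (simp add: disk_et_def rot90_def c q a_def b_def field_simps)
  have e1: "x1 = (x1 * a + x2 * b) * a + (x1 * b - x2 * a) * b"
  proof -
    have "(x1 * a + x2 * b) * a + (x1 * b - x2 * a) * b = x1 * (a\<^sup>2 + b\<^sup>2)"
      by (simp add: power2_eq_square algebra_simps)
    then show ?thesis using ab by simp
  qed
  have e2: "x2 = (x1 * a + x2 * b) * b - (x1 * b - x2 * a) * a"
  proof -
    have "(x1 * a + x2 * b) * b - (x1 * b - x2 * a) * a = x2 * (a\<^sup>2 + b\<^sup>2)"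
      by (simp add: power2_eq_square algebra_simps)
    then show ?thesis using ab by simp
  qed
  show ?thesis unfolding en et x using e1 e2 by (simp add: inner_Pair)
qed

lemma reflect_scale: "reflect n (a *\<^sub>R u) = a *\<^sub>R reflect n u"
  by (simp add: reflect_def algebra_simps)

lemma reflect_neg: "reflect (- n) u = reflect n u"
  by (simp add: reflect_def)

lemma cg_front:
  assumes "cell_geometry G"
  shows "frontier (box G) = openL G \<union> openR G \<union> (\<Union>k\<in>{1..nb G}. arc G k)"
  using assms[unfolded cell_geometry_def] by (elim conjE) assumption

lemma cg_arcs:
  assumes "cell_geometry G"
  shows "\<forall>k\<in>{1..nb G}.
        crad G k > 0 \<and> arc G k \<subseteq> sphere (ctr G k) (crad G k) \<and>
        compact (arc G k) \<and> connected (arc G k) \<and> infinite (arc G k) \<and>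
        (\<forall>q\<in>arc G k. \<exists>e>0. ball q e \<inter> box G \<inter> ball (ctr G k) (crad G k) = {})"
  using assms[unfolded cell_geometry_def] by (elim conjE) assumption

locale pf =
  fixes G :: cellgeom and \<gamma> :: "real \<Rightarrow> pt" and m :: nat and s :: "nat \<Rightarrow> real"
    and \<mu> :: real and \<omega>0 :: real
  assumes cg: "cell_geometry G" and ap: "admissible_path G \<gamma> m s" and mupos: "\<mu> > 0"
begin

lemmas APD = ap[unfolded admissible_path_def]

lemma A1: "m \<ge> 1" "s 0 = 0" "s m = 1" "\<forall>i<m. s i < s (Suc i)"
proof -
  show "m \<ge> 1" using APD by (elim conjE) assumption
  show "s 0 = 0" using APD by (elim conjE) assumption
  show "s m = 1" using APD by (elim conjE) assumption
  show "\<forall>i<m. s i < s (Suc i)" using APD by (elim conjE) assumption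
qed

lemma A2: "continuous_on {0..1} \<gamma>" "\<gamma> ` {0..1} \<subseteq> cell G"
proof -
  show "continuous_on {0..1} \<gamma>" using APD by (elim conjE) assumption
  show "\<gamma> ` {0..1} \<subseteq> cell G" using APD by (elim conjE) assumption
qed

lemma A3: "\<forall>i<m. \<gamma> (s i) \<noteq> \<gamma> (s (Suc i)) \<and>
        \<gamma> differentiable_on {s i<..<s (Suc i)} \<and>
        (\<exists>lam. continuous_on {s i..s (Suc i)} lam \<and> strict_mono_on {s i..s (Suc i)} lam \<and>
             lam (s i) = 0 \<and> lam (s (Suc i)) = 1 \<and>
             (\<forall>t\<in>{s i..s (Suc i)}.
                \<gamma> t = (1 - lam t) *\<^sub>R \<gamma> (s i) + lam t *\<^sub>R \<gamma> (s (Suc i))))"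
  using APD by (elim conjE) assumption

lemma A4: "\<forall>i. 0 < i \<and> i < m \<longrightarrow> \<gamma> (s i) \<in> frontier (box G) \<union> sphere (dctr G) (rd G)"
  using APD by (elim conjE) assumption

lemma A5: "\<forall>i k. 0 < i \<and> i < m \<and> k \<in> {1..nb G} \<and> \<gamma> (s i) \<in> arc G k \<longrightarrow>
        sgn (\<gamma> (s (Suc i)) - \<gamma> (s i)) =
        reflect ((1 / crad G k) *\<^sub>R (\<gamma> (s i) - ctr G k)) (sgn (\<gamma> (s i) - \<gamma> (s (i - 1))))"
  using APD by (elim conjE) assumption

lemma A6: "\<forall>t\<in>{0<..<1}. \<gamma> t \<notin> openings G"
  using APD by (elim conjE) assumption

lemma A7: "\<forall>t\<in>{0..1}. \<gamma> t \<notin> corners G"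
  using APD by (elim conjE) assumption

lemma A8: "\<forall>i<m. \<forall>t\<in>{s i..s (Suc i)}. \<gamma> t \<in> sphere (dctr G) (rd G) \<longrightarrow>
        (\<gamma> (s (Suc i)) - \<gamma> (s i)) \<bullet> (\<gamma> t - dctr G) \<noteq> 0"
  using APD by (elim conjE) assumption

lemma s_mono: "i \<le> j \<Longrightarrow> j \<le> m \<Longrightarrow> s i \<le> s j"
proof (induction j)
  case 0 then show ?case by simp
next
  case (Suc j)
  show ?case
  proof (cases "i = Suc j")
    case True then show ?thesis by simp
  next
    case False
    then have "s i \<le> s j" using Suc by simp
    also have "s j < s (Suc j)" using A1(4) Suc by simp
    finally show ?thesis by simp
  qed
qed

lemma s_range: "i \<le> m \<Longrightarrow> 0 \<le> s i \<and> s i \<le> 1"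
  using s_mono[of 0 i] s_mono[of i m] A1 by simp

lemma s_strict: assumes "i < j" "j \<le> m" shows "s i < s j"
proof -
  have "s i < s (Suc i)" using A1(4) assms by simp
  moreover have "s (Suc i) \<le> s j" using s_mono assms by simp
  ultimately show ?thesis by simp
qed

definition P :: "nat \<Rightarrow> pt" where "P i = \<gamma> (s i)"
definition d :: "nat \<Rightarrow> pt" where "d i = P (Suc i) - P i"

lemma d_nz: "i < m \<Longrightarrow> d i \<noteq> 0"
  using A3 by (auto simp: d_def P_def)

definition segprop :: "nat \<Rightarrow> (real \<Rightarrow> real) \<Rightarrow> bool" where
  "segprop i f \<longleftrightarrow> continuous_on {0..1} f \<and> (\<forall>y\<in>{0..1}. f y \<in> {s i..s (Suc i)} \<and> \<gamma> (f y) = P i + y *\<^sub>R d i)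
            \<and> mono_on {0..1} f \<and> f 0 = s i \<and> f 1 = s (Suc i)"

definition mu :: "nat \<Rightarrow> real \<Rightarrow> real" where "mu i = (SOME f. segprop i f)"

lemma mu_prop: assumes "i < m" shows "segprop i (mu i)"
proof -
  obtain lam where l: "continuous_on {s i..s (Suc i)} lam" "strict_mono_on {s i..s (Suc i)} lam"
    "lam (s i) = 0" "lam (s (Suc i)) = 1"
    "\<forall>t\<in>{s i..s (Suc i)}. \<gamma> t = (1 - lam t) *\<^sub>R \<gamma> (s i) + lam t *\<^sub>R \<gamma> (s (Suc i))"
  proof -
    have "\<exists>lam. continuous_on {s i..s (Suc i)} lam \<and> strict_mono_on {s i..s (Suc i)} lam \<and>
             lam (s i) = 0 \<and> lam (s (Suc i)) = 1 \<and>
             (\<forall>t\<in>{s i..s (Suc i)}.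
                \<gamma> t = (1 - lam t) *\<^sub>R \<gamma> (s i) + lam t *\<^sub>R \<gamma> (s (Suc i)))"
      using A3[rule_format, OF assms] by (elim conjE) assumption
    then show ?thesis using that by blast
  qed
  obtain f where f: "continuous_on {0..1} f" "\<forall>y\<in>{0..1}. f y \<in> {s i..s (Suc i)} \<and> lam (f y) = y"
            "mono_on {0..1} f" "f 0 = s i" "f 1 = s (Suc i)"
    using inv_param[OF l(1-4)] A1(4) assms by blast
  have "\<forall>y\<in>{0..1}. f y \<in> {s i..s (Suc i)} \<and> \<gamma> (f y) = P i + y *\<^sub>R d i"
  proof
    fix y :: real assume y: "y \<in> {0..1}"
    have fy: "f y \<in> {s i..s (Suc i)}" "lam (f y) = y" using f(2) y by blast+
    have "\<gamma> (f y) = (1 - lam (f y)) *\<^sub>R P i + lam (f y) *\<^sub>R P (Suc i)"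
      using l(5) fy(1) unfolding P_def by blast
    then have "\<gamma> (f y) = (1 - y) *\<^sub>R P i + y *\<^sub>R P (Suc i)" using fy(2) by simp
    also have "\<dots> = P i + y *\<^sub>R d i" by (simp add: d_def algebra_simps)
    finally show "f y \<in> {s i..s (Suc i)} \<and> \<gamma> (f y) = P i + y *\<^sub>R d i" using fy by simp
  qed
  then have "segprop i f" using f unfolding segprop_def by blast
  then show ?thesis unfolding mu_def by (metis someI_ex)
qed

lemma mu_facts:
  assumes "i < m"
  shows "continuous_on {0..1} (mu i)" "\<And>y. y \<in> {0..1} \<Longrightarrow> mu i y \<in> {s i..s (Suc i)}"
    "\<And>y. y \<in> {0..1} \<Longrightarrow> \<gamma> (mu i y) = P i + y *\<^sub>R d i"
    "mono_on {0..1} (mu i)" "mu i 0 = s i" "mu i 1 = s (Suc i)"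
  using mu_prop[OF assms] unfolding segprop_def by auto

lemma segpt: assumes "i < m" "0 \<le> y" "y \<le> 1" shows "P i + y *\<^sub>R d i \<in> cell G"
proof -
  have "mu i y \<in> {s i..s (Suc i)}" using mu_facts(2)[OF assms(1)] assms by auto
  then have "mu i y \<in> {0..1}" using s_range[of i] s_range[of "Suc i"] assms by auto
  then have "\<gamma> (mu i y) \<in> cell G" using A2 by auto
  then show ?thesis using mu_facts(3)[OF assms(1)] assms by auto
qed

definition onD :: "nat \<Rightarrow> bool" where "onD i \<longleftrightarrow> P i \<in> sphere (dctr G) (rd G)"
definition arck :: "nat \<Rightarrow> nat" where "arck i = (SOME k. k \<in> {1..nb G} \<and> P i \<in> arc G k)"
definition nv :: "nat \<Rightarrow> pt" where "nv i = (1 / crad G (arck i)) *\<^sub>R (ctr G (arck i) - P i)"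

primrec V :: "nat \<Rightarrow> pt" where
  "V 0 = \<mu> *\<^sub>R d 0"
| "V (Suc i) = (if onD (Suc i)
      then ((V i \<bullet> disk_en G (P (Suc i))) / (- (d (Suc i) \<bullet> disk_en G (P (Suc i))))) *\<^sub>R d (Suc i)
      else reflect (nv (Suc i)) (V i))"

lemma s_int: assumes "0 < i" "i < m" shows "s i \<in> {0<..<1}"
  using s_strict[of 0 i] s_strict[of i m] assms A1 by auto

lemma P_int_notopen: assumes "0 < i" "i < m" shows "P i \<notin> openings G"
  using A6 s_int[OF assms] by (simp add: P_def)

lemma arc_of:
  assumes "0 < i" "i < m" "\<not> onD i"
  shows "arck i \<in> {1..nb G} \<and> P i \<in> arc G (arck i)"
proof -
  have "P i \<in> frontier (box G)" using A4 assms by (auto simp: P_def onD_def)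
  then have "\<exists>k. k \<in> {1..nb G} \<and> P i \<in> arc G k"
    using P_int_notopen[OF assms(1,2)] cg_front[OF cg] by (auto simp: openings_def)
  then show ?thesis unfolding arck_def by (rule someI_ex)
qed

lemma P_suc: "P (Suc i) = P i + d i" by (simp add: d_def)

lemma disk_in:
  assumes i: "0 < i" "i < m" and D: "onD i"
  shows "d (i - 1) \<bullet> (P i - dctr G) < 0" "d i \<bullet> (P i - dctr G) > 0"
proof -
  let ?c = "dctr G" and ?r = "rd G"
  have dq: "dist ?c (P i) = ?r" using D by (simp add: onD_def)
  have im: "i - 1 < m" "Suc (i - 1) = i" using i by auto
  have "s i \<in> {s (i - 1)..s (Suc (i - 1))}" using im s_mono[of "i - 1" i] i by auto
  then have "d (i - 1) \<bullet> (P i - ?c) \<noteq> 0"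
    using A8 im D unfolding onD_def d_def P_def by (metis (no_types, lifting))
  moreover have "\<not> d (i - 1) \<bullet> (P i - ?c) > 0"
  proof
    assume pos: "d (i - 1) \<bullet> (P i - ?c) > 0"
    obtain h where h: "0 < h" "h \<le> 1" "P i - h *\<^sub>R d (i - 1) \<in> ball ?c ?r"
      using ball_escape[OF dq pos zero_less_one] by blast
    have "P i - h *\<^sub>R d (i - 1) = P (i - 1) + (1 - h) *\<^sub>R d (i - 1)"
      using P_suc[of "i - 1"] im by (simp add: algebra_simps)
    moreover have "P (i - 1) + (1 - h) *\<^sub>R d (i - 1) \<in> cell G" using segpt im h by simp
    ultimately show False using h by (simp add: cell_def)
  qed
  ultimately show "d (i - 1) \<bullet> (P i - dctr G) < 0" by simp
  have "s i \<in> {s i..s (Suc i)}" using A1(4) i by auto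
  then have "d i \<bullet> (P i - ?c) \<noteq> 0"
    using A8 i D unfolding onD_def d_def P_def by (metis (no_types, lifting))
  moreover have "\<not> d i \<bullet> (P i - ?c) < 0"
  proof
    assume neg: "d i \<bullet> (P i - ?c) < 0"
    then have pos: "(- d i) \<bullet> (P i - ?c) > 0" by simp
    obtain h where h: "0 < h" "h \<le> 1" "P i - h *\<^sub>R (- d i) \<in> ball ?c ?r"
      using ball_escape[OF dq pos zero_less_one] by blast
    moreover have "P i + h *\<^sub>R d i \<in> cell G" using segpt i h by simp
    ultimately show False by (simp add: cell_def)
  qed
  ultimately show "d i \<bullet> (P i - dctr G) > 0" by simp
qed

lemma en_eq: "disk_en G q = - ((1 / rd G) *\<^sub>R (q - dctr G))"
  by (simp add: disk_en_def algebra_simps)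

lemma Vinv: "i < m \<Longrightarrow> \<exists>\<kappa>>0. V i = \<kappa> *\<^sub>R d i"
proof (induction i)
  case 0 then show ?case using mupos by auto
next
  case (Suc i)
  then obtain \<kappa> where k: "\<kappa> > 0" "V i = \<kappa> *\<^sub>R d i" by auto
  have r: "rd G > 0" using cg_basic[OF cg] by simp
  show ?case
  proof (cases "onD (Suc i)")
    case True
    let ?q = "P (Suc i)" and ?c = "dctr G"
    have di: "d i \<bullet> (?q - ?c) < 0" "d (Suc i) \<bullet> (?q - ?c) > 0"
      using disk_in[of "Suc i"] Suc.prems True by auto
    have a: "V i \<bullet> disk_en G ?q = \<kappa> * (- (d i \<bullet> (?q - ?c)) / rd G)"
      by (simp add: k en_eq inner_minus_right)
    have b: "d (Suc i) \<bullet> disk_en G ?q = - (d (Suc i) \<bullet> (?q - ?c)) / rd G"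
      by (simp add: en_eq inner_minus_right)
    have "\<kappa> * (- (d i \<bullet> (?q - ?c)) / rd G) > 0" using di k r by (intro mult_pos_pos divide_pos_pos) auto
    then have "V i \<bullet> disk_en G ?q > 0" using a by linarith
    moreover have "- (d (Suc i) \<bullet> disk_en G ?q) > 0" using b di r by simp
    ultimately have "(V i \<bullet> disk_en G ?q) / (- (d (Suc i) \<bullet> disk_en G ?q)) > 0" by (rule divide_pos_pos)
    then show ?thesis using True by (simp only: V.simps if_True) blast
  next
    case False
    let ?k = "arck (Suc i)"
    have ak: "?k \<in> {1..nb G}" "P (Suc i) \<in> arc G ?k" using arc_of[of "Suc i"] Suc.prems False by auto
    have A: "sgn (d (Suc i)) = reflect ((1 / crad G ?k) *\<^sub>R (P (Suc i) - ctr G ?k)) (sgn (d i))"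
      using A5 ak Suc.prems unfolding d_def P_def by auto
    have nvq: "nv (Suc i) = - ((1 / crad G ?k) *\<^sub>R (P (Suc i) - ctr G ?k))"
      by (simp add: nv_def algebra_simps)
    have dn: "d i \<noteq> 0" "d (Suc i) \<noteq> 0" using d_nz Suc.prems by auto
    have "V (Suc i) = \<kappa> *\<^sub>R reflect (nv (Suc i)) (d i)"
      using False by (simp add: k reflect_scale)
    also have "d i = norm (d i) *\<^sub>R sgn (d i)" by (simp add: sgn_div_norm dn)
    also have "reflect (nv (Suc i)) (norm (d i) *\<^sub>R sgn (d i)) = norm (d i) *\<^sub>R sgn (d (Suc i))"
      by (simp add: reflect_scale nvq reflect_neg A)
    also have "sgn (d (Suc i)) = (1 / norm (d (Suc i))) *\<^sub>R d (Suc i)" by (simp add: sgn_div_norm divide_inverse_commute)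
    finally have "V (Suc i) = (\<kappa> * norm (d i) / norm (d (Suc i))) *\<^sub>R d (Suc i)" by simp
    moreover have "\<kappa> * norm (d i) / norm (d (Suc i)) > 0" using k dn by simp
    ultimately show ?thesis by blast
  qed
qed

definition kap :: "nat \<Rightarrow> real" where "kap i = norm (V i) / norm (d i)"

lemma kap: assumes "i < m" shows "kap i > 0" "V i = kap i *\<^sub>R d i"
proof -
  obtain \<kappa> where k: "\<kappa> > 0" "V i = \<kappa> *\<^sub>R d i" using Vinv[OF assms] by auto
  have dn: "d i \<noteq> 0" using d_nz[OF assms] .
  have "kap i = \<kappa>" using k dn by (simp add: kap_def)
  then show "kap i > 0" "V i = kap i *\<^sub>R d i" using k by auto
qed

primrec tt :: "nat \<Rightarrow> real" where
  "tt 0 = 0"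
| "tt (Suc i) = tt i + (if i < m then 1 / kap i else 1)"

lemma tt_sm: "strict_mono tt"
proof (rule strict_monoI_Suc)
  fix i
  have "(if i < m then 1 / kap i else 1) > 0" using kap(1)[of i] by auto
  then show "tt i < tt (Suc i)" by simp
qed

declare tt.simps(2)[simp del]

lemma tt_le: "i \<le> j \<Longrightarrow> tt i \<le> tt j" using tt_sm by (simp add: strict_mono_less_eq)
lemma tt_less: "i < j \<Longrightarrow> tt i < tt j" using tt_sm by (simp add: strict_mono_less)

lemma tt_nonneg: "tt i \<ge> 0"
  using tt_sm strict_mono_less_eq[OF tt_sm, of 0 i] by simp

lemma tt_len: assumes "i < m" shows "kap i * (tt (Suc i) - tt i) = 1"
  using kap(1)[OF assms] assms by (simp add: tt.simps(2))

definition Tf :: real where "Tf = tt m"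

definition idx :: "real \<Rightarrow> nat" where "idx t = card {j\<in>{1..<m}. tt j \<le> t}"

lemma idx_eq: assumes "i < m" "tt i \<le> t" "Suc i = m \<or> t < tt (Suc i)" shows "idx t = i"
  unfolding idx_def using cnt_eq[OF tt_sm assms(1)] assms by blast

lemma idx_mono: "s1 \<le> t \<Longrightarrow> idx s1 \<le> idx t"
  unfolding idx_def by (rule cnt_mono)

lemma piece_of:
  assumes "0 \<le> t" "t \<le> Tf"
  shows "\<exists>i<m. tt i \<le> t \<and> t \<le> tt (Suc i) \<and> (Suc i = m \<or> t < tt (Suc i))"
proof -
  define J where "J = {j. j < m \<and> tt j \<le> t}"
  have fin: "finite J" by (simp add: J_def)
  have ne: "0 \<in> J" using assms A1(1) by (simp add: J_def)
  define i where "i = Max J"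
  have iJ: "i \<in> J" using Max_in[OF fin] ne by (auto simp: i_def)
  then have i: "i < m" "tt i \<le> t" by (auto simp: J_def)
  show ?thesis
  proof (cases "Suc i = m")
    case True
    then show ?thesis using i assms by (auto simp: Tf_def)
  next
    case False
    then have "Suc i < m" using i by simp
    moreover have "Suc i \<notin> J" using fin i_def by (metis Max_ge Suc_n_not_le_n)
    ultimately have "t < tt (Suc i)" by (auto simp: J_def)
    then show ?thesis using i by auto
  qed
qed

lemma idx_range: assumes "0 \<le> t" "t \<le> Tf"
  shows "idx t < m" "tt (idx t) \<le> t" "t \<le> tt (Suc (idx t))"
  using piece_of[OF assms] idx_eq by force+

definition sig :: "real \<Rightarrow> real" where "sig t = mu (idx t) (kap (idx t) * (t - tt (idx t)))"

lemma yrange: assumes "i < m" "tt i \<le> t" "t \<le> tt (Suc i)"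
  shows "0 \<le> kap i * (t - tt i)" "kap i * (t - tt i) \<le> 1"
proof -
  show "0 \<le> kap i * (t - tt i)" using kap(1)[OF assms(1)] assms by simp
  have "kap i * (t - tt i) \<le> kap i * (tt (Suc i) - tt i)"
    using kap(1)[OF assms(1)] assms by (simp add: mult_left_mono)
  then show "kap i * (t - tt i) \<le> 1" using tt_len[OF assms(1)] by simp
qed

lemma sig_piece: assumes "i < m" "tt i \<le> t" "t \<le> tt (Suc i)"
  shows "sig t = mu i (kap i * (t - tt i))"
proof (cases "Suc i = m \<or> t < tt (Suc i)")
  case True
  then show ?thesis using idx_eq[OF assms(1,2)] by (simp add: sig_def)
next
  case False
  then have t: "t = tt (Suc i)" "Suc i < m" using assms by auto
  have "t < tt (Suc (Suc i))" using t tt_less[of "Suc i" "Suc (Suc i)"] by simp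
  then have "idx t = Suc i" using idx_eq[of "Suc i" t] t by simp
  then have "sig t = mu (Suc i) 0" using t by (simp add: sig_def)
  also have "\<dots> = s (Suc i)" using mu_facts(5)[OF t(2)] .
  also have "\<dots> = mu i 1" using mu_facts(6)[OF assms(1)] by simp
  also have "1 = kap i * (t - tt i)" using tt_len[OF assms(1)] t by simp
  finally show ?thesis .
qed

lemma pos_piece: assumes "i < m" "tt i \<le> t" "t \<le> tt (Suc i)"
  shows "\<gamma> (sig t) = P i + (t - tt i) *\<^sub>R V i" "sig t \<in> {s i..s (Suc i)}"
proof -
  have y: "kap i * (t - tt i) \<in> {0..1}" using yrange[OF assms] by simp
  have "\<gamma> (sig t) = P i + (kap i * (t - tt i)) *\<^sub>R d i"
    using sig_piece[OF assms] mu_facts(3)[OF assms(1) y] by simp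
  also have "\<dots> = P i + (t - tt i) *\<^sub>R V i" using kap(2)[OF assms(1)] by (simp add: algebra_simps)
  finally show "\<gamma> (sig t) = P i + (t - tt i) *\<^sub>R V i" .
  show "sig t \<in> {s i..s (Suc i)}" using sig_piece[OF assms] mu_facts(2)[OF assms(1) y] by simp
qed

lemma sig_range: assumes "0 \<le> t" "t \<le> Tf" shows "sig t \<in> {0..1}"
proof -
  obtain i where i: "i < m" "tt i \<le> t" "t \<le> tt (Suc i)" using piece_of[OF assms] by blast
  then have "sig t \<in> {s i..s (Suc i)}" using pos_piece by blast
  then show ?thesis using s_range[of i] s_range[of "Suc i"] i by auto
qed

lemma Tf_pos: "Tf > 0"
  using tt_less[of 0 m] A1(1) by (simp add: Tf_def)

lemma sig0: "sig 0 = 0"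
proof -
  have "tt 0 \<le> tt (Suc 0)" by (rule tt_le) simp
  then have "sig 0 = mu 0 (kap 0 * (0 - tt 0))" using sig_piece[of 0 0] A1(1) by simp
  then show ?thesis using mu_facts(5)[of 0] A1 by simp
qed

lemma sigTf: "sig Tf = 1"
proof -
  have m: "m - 1 < m" "Suc (m - 1) = m" using A1(1) by auto
  have "tt (m - 1) \<le> tt m" by (rule tt_le) simp
  then have "sig Tf = mu (m - 1) (kap (m - 1) * (Tf - tt (m - 1)))"
    using sig_piece[of "m - 1" Tf] m by (simp add: Tf_def)
  also have "kap (m - 1) * (Tf - tt (m - 1)) = 1" using tt_len[of "m - 1"] m by (simp add: Tf_def)
  finally show ?thesis using mu_facts(6)[of "m - 1"] m A1 by simp
qed

lemma pieces_union: "{0..Tf} = (\<Union>i\<in>{..<m}. {tt i..tt (Suc i)})"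
proof
  show "{0..Tf} \<subseteq> (\<Union>i\<in>{..<m}. {tt i..tt (Suc i)})"
    using piece_of by fastforce
  show "(\<Union>i\<in>{..<m}. {tt i..tt (Suc i)}) \<subseteq> {0..Tf}"
  proof
    fix t assume "t \<in> (\<Union>i\<in>{..<m}. {tt i..tt (Suc i)})"
    then obtain i where i: "i < m" "tt i \<le> t" "t \<le> tt (Suc i)" by auto
    have "tt (Suc i) \<le> tt m" using i by (intro tt_le) simp
    then show "t \<in> {0..Tf}" using i tt_nonneg[of i] by (auto simp: Tf_def)
  qed
qed

lemma sig_cont: "continuous_on {0..Tf} sig"
  unfolding pieces_union
proof (rule continuous_on_closed_Union)
  fix i assume i: "i \<in> {..<m}"
  have "continuous_on {tt i..tt (Suc i)} (\<lambda>t. mu i (kap i * (t - tt i)))"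
  proof (rule continuous_on_compose2[of "{0..1}" "mu i"])
    show "continuous_on {0..1} (mu i)" using mu_facts(1) i by simp
    show "continuous_on {tt i..tt (Suc i)} (\<lambda>t. kap i * (t - tt i))" by (intro continuous_intros)
    show "(\<lambda>t. kap i * (t - tt i)) ` {tt i..tt (Suc i)} \<subseteq> {0..1}"
      using yrange i by auto
  qed
  then show "continuous_on {tt i..tt (Suc i)} sig"
    by (rule continuous_on_eq) (use sig_piece i in auto)
qed auto

lemma sig_mono: "mono_on {0..Tf} sig"
proof (rule mono_onI)
  fix x y assume xy: "x \<in> {0..Tf}" "y \<in> {0..Tf}" "x \<le> y"
  let ?i = "idx x" and ?j = "idx y"
  have ix: "?i < m" "tt ?i \<le> x" "x \<le> tt (Suc ?i)" using idx_range xy by auto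
  have iy: "?j < m" "tt ?j \<le> y" "y \<le> tt (Suc ?j)" using idx_range xy by auto
  have ij: "?i \<le> ?j" using idx_mono xy by simp
  show "sig x \<le> sig y"
  proof (cases "?i = ?j")
    case True
    have a: "kap ?i * (x - tt ?i) \<in> {0..1}" "kap ?i * (y - tt ?i) \<in> {0..1}"
      using yrange ix iy True by auto
    have "kap ?i * (x - tt ?i) \<le> kap ?i * (y - tt ?i)" using kap(1)[OF ix(1)] xy by simp
    then have "mu ?i (kap ?i * (x - tt ?i)) \<le> mu ?i (kap ?i * (y - tt ?i))"
      using mu_facts(4)[OF ix(1)] a by (simp add: mono_on_def)
    then show ?thesis using sig_piece ix iy True by simp
  next
    case False
    then have "?i < ?j" using ij by simp
    have "sig x \<le> s (Suc ?i)" using pos_piece(2)[OF ix] by simp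
    also have "s (Suc ?i) \<le> s ?j" using s_mono \<open>?i < ?j\<close> iy by simp
    also have "s ?j \<le> sig y" using pos_piece(2)[OF iy] by simp
    finally show ?thesis .
  qed
qed

definition posf :: "real \<Rightarrow> pt" where "posf t = \<gamma> (sig t)"
definition velf :: "real \<Rightarrow> pt" where "velf t = V (idx t)"
definition JI :: "nat set" where "JI = {i\<in>{1..<m}. V i \<noteq> V (i - 1)}"
definition DI :: "nat set" where "DI = {i\<in>{1..<m}. onD i}"

lemma Vconst: "i \<le> j \<Longrightarrow> (\<forall>l. i < l \<and> l \<le> j \<longrightarrow> V l = V (l - 1)) \<Longrightarrow> V j = V i"
proof (induction j)
  case 0 then show ?case by simp
next
  case (Suc j)
  show ?case
  proof (cases "i = Suc j")
    case True then show ?thesis by simp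
  next
    case False
    then have "V j = V i" using Suc by auto
    moreover have "V (Suc j) = V j"
    proof -
      have "i < Suc j" using Suc.prems False by simp
      then have "V (Suc j) = V (Suc j - 1)" using Suc.prems(2) by blast
      then show ?thesis by simp
    qed
    ultimately show ?thesis by simp
  qed
qed

lemma posf_piece: "i < m \<Longrightarrow> tt i \<le> t \<Longrightarrow> t \<le> tt (Suc i) \<Longrightarrow> posf t = P i + (t - tt i) *\<^sub>R V i"
  unfolding posf_def by (rule pos_piece(1))

lemma posf_tt: "i < m \<Longrightarrow> posf (tt i) = P i"
  using posf_piece[of i "tt i"] tt_le[of i "Suc i"] by simp

lemma chain:
  assumes "i \<le> j" "j < m" "\<forall>l. i < l \<and> l \<le> j \<longrightarrow> V l = V (l - 1)"
  shows "\<forall>t\<in>{tt i..tt (Suc j)}. posf t = P i + (t - tt i) *\<^sub>R V i"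
  using assms
proof (induction j)
  case 0
  then have "i = 0" by simp
  then show ?case using posf_piece[of 0] 0 by auto
next
  case (Suc j)
  show ?case
  proof (cases "i = Suc j")
    case True then show ?thesis using posf_piece[of "Suc j"] Suc.prems by auto
  next
    case False
    then have ij: "i \<le> j" using Suc.prems by simp
    have IH: "\<forall>t\<in>{tt i..tt (Suc j)}. posf t = P i + (t - tt i) *\<^sub>R V i"
      using Suc.IH ij Suc.prems by auto
    have VS: "V (Suc j) = V i" using Vconst[of i "Suc j"] Suc.prems by simp
    have PS: "P (Suc j) = P i + (tt (Suc j) - tt i) *\<^sub>R V i"
      using IH posf_tt[of "Suc j"] Suc.prems ij tt_le[of i "Suc j"] by auto
    show ?thesis
    proof
      fix t assume t: "t \<in> {tt i..tt (Suc (Suc j))}"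
      show "posf t = P i + (t - tt i) *\<^sub>R V i"
      proof (cases "t \<le> tt (Suc j)")
        case True then show ?thesis using IH t by auto
      next
        case False
        then have "posf t = P (Suc j) + (t - tt (Suc j)) *\<^sub>R V (Suc j)"
          using posf_piece[of "Suc j" t] Suc.prems t by auto
        also have "\<dots> = P i + (t - tt i) *\<^sub>R V i" using PS VS by (simp add: algebra_simps)
        finally show ?thesis .
      qed
    qed
  qed
qed

lemma ff_pos:
  assumes st: "0 \<le> s1" "s1 \<le> t" "t \<le> Tf" and nj: "tt ` JI \<inter> {s1<..<t} = {}"
  shows "posf t = posf s1 + (t - s1) *\<^sub>R velf s1"
proof (cases "s1 = t")
  case True then show ?thesis by simp
next
  case False
  then have st': "s1 < t" using st by simp
  let ?i = "idx s1" and ?k = "idx t"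
  have i: "?i < m" "tt ?i \<le> s1" "s1 \<le> tt (Suc ?i)" using idx_range st by auto
  have k: "?k < m" "tt ?k \<le> t" "t \<le> tt (Suc ?k)" using idx_range st by auto
  have ik: "?i \<le> ?k" using idx_mono st by simp
  have si: "s1 < tt (Suc ?i)"
  proof (rule ccontr)
    assume "\<not> s1 < tt (Suc ?i)"
    then have "s1 = tt (Suc ?i)" using i by simp
    then have "Suc ?i = m"
      using idx_eq[of "Suc ?i" s1] tt_less[of "Suc ?i" "Suc (Suc ?i)"] i(1) by (cases "Suc ?i < m") auto
    then have "s1 = Tf" using \<open>s1 = tt (Suc ?i)\<close> by (simp add: Tf_def)
    then show False using st' st by simp
  qed
  define j where "j = (if ?i < ?k \<and> t = tt ?k then ?k - 1 else ?k)"
  have j: "?i \<le> j" "j < m" "t \<in> {tt ?i..tt (Suc j)}"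
    using ik k i st' by (auto simp: j_def)
  have hyp: "\<forall>l. ?i < l \<and> l \<le> j \<longrightarrow> V l = V (l - 1)"
  proof (intro allI impI)
    fix l assume l: "?i < l \<and> l \<le> j"
    have "tt (Suc ?i) \<le> tt l" using l by (intro tt_le) simp
    then have a: "s1 < tt l" using si by simp
    have b: "tt l < t"
    proof (cases "?i < ?k \<and> t = tt ?k")
      case True
      then have "l < ?k" using l by (auto simp: j_def)
      then have "tt l < tt ?k" by (rule tt_less)
      then show ?thesis using True by simp
    next
      case False
      then have "j = ?k" unfolding j_def by (simp only: if_False)
      then have "l \<le> ?k" using l by simp
      then have "tt l \<le> tt ?k" by (rule tt_le)
      moreover have "tt l \<noteq> t"
      proof
        assume "tt l = t"
        then have "tt l = tt ?k" using \<open>tt l \<le> tt ?k\<close> k by simp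
        then have "l = ?k" using tt_sm by (simp add: strict_mono_eq)
        then show False using False l \<open>tt l = t\<close> by auto
      qed
      ultimately show ?thesis using k by simp
    qed
    have "l \<in> {1..<m}" using l j by auto
    then have "l \<notin> JI" using nj a b by auto
    then show "V l = V (l - 1)" using \<open>l \<in> {1..<m}\<close> by (simp add: JI_def)
  qed
  have "posf t = P ?i + (t - tt ?i) *\<^sub>R V ?i" using chain[OF j(1,2) hyp] j(3) by blast
  moreover have "posf s1 = P ?i + (s1 - tt ?i) *\<^sub>R V ?i" using posf_piece i by simp
  ultimately show ?thesis by (simp add: velf_def scaleR_diff_left)
qed

lemma ff_vel:
  assumes st: "0 \<le> s1" "s1 \<le> t" "t < Tf" and nj: "tt ` JI \<inter> {s1<..t} = {}"
  shows "velf t = velf s1"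
proof -
  let ?i = "idx s1" and ?k = "idx t"
  have i: "?i < m" "tt ?i \<le> s1" "s1 \<le> tt (Suc ?i)" using idx_range st by auto
  have k: "?k < m" "tt ?k \<le> t" "t \<le> tt (Suc ?k)" using idx_range st by auto
  have ik: "?i \<le> ?k" using idx_mono st by simp
  have si: "s1 < tt (Suc ?i)"
  proof (rule ccontr)
    assume "\<not> s1 < tt (Suc ?i)"
    then have "s1 = tt (Suc ?i)" using i by simp
    then have "Suc ?i = m"
      using idx_eq[of "Suc ?i" s1] tt_less[of "Suc ?i" "Suc (Suc ?i)"] i(1) by (cases "Suc ?i < m") auto
    then have "s1 = Tf" using \<open>s1 = tt (Suc ?i)\<close> by (simp add: Tf_def)
    then show False using st by simp
  qed
  have hyp: "\<forall>l. ?i < l \<and> l \<le> ?k \<longrightarrow> V l = V (l - 1)"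
  proof (intro allI impI)
    fix l assume l: "?i < l \<and> l \<le> ?k"
    have "tt (Suc ?i) \<le> tt l" using l by (intro tt_le) simp
    then have a: "s1 < tt l" using si by simp
    have "tt l \<le> tt ?k" using l by (intro tt_le) simp
    then have b: "tt l \<le> t" using k by simp
    have "l \<in> {1..<m}" using l k by auto
    then have "l \<notin> JI" using nj a b by auto
    then show "V l = V (l - 1)" using \<open>l \<in> {1..<m}\<close> by (simp add: JI_def)
  qed
  show ?thesis using Vconst[OF ik hyp] by (simp add: velf_def)
qed

lemma DI_JI: "DI \<subseteq> JI"
proof
  fix i assume i: "i \<in> DI"
  then have i1: "0 < i" "i < m" "onD i" by (auto simp: DI_def)
  let ?q = "P i" and ?c = "dctr G"
  have si: "Suc (i - 1) = i" "i - 1 < m" using i1 by auto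
  have di: "d (i - 1) \<bullet> (?q - ?c) < 0" "d i \<bullet> (?q - ?c) > 0" using disk_in[OF i1] by auto
  obtain k where k: "k > 0" "V (i - 1) = k *\<^sub>R d (i - 1)" using kap si by blast
  obtain k' where k': "k' > 0" "V i = k' *\<^sub>R d i" using kap i1 by blast
  have "V (i - 1) \<bullet> (?q - ?c) < 0" using k di by (simp add: mult_pos_neg)
  moreover have "V i \<bullet> (?q - ?c) > 0" using k' di by simp
  ultimately have "V i \<noteq> V (i - 1)" by auto
  then show "i \<in> JI" using i by (auto simp: JI_def DI_def)
qed

definition dl :: "nat \<Rightarrow> real" where "dl i = (tt (i - 1) + tt i) / 2"
definition wv :: "nat \<Rightarrow> real" where "wv i = V i \<bullet> disk_et G (P i)"
definition cv :: "nat \<Rightarrow> real" where "cv i = V (i - 1) \<bullet> disk_et G (P i)"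
definition uv :: "nat \<Rightarrow> real" where "uv i = (if onD i then cv i else wv i)"
definition nd :: "real \<Rightarrow> nat" where "nd t = card {i\<in>{1..<m}. dl i \<le> t}"
definition om :: "real \<Rightarrow> real" where
  "om t = (if nd t = 0 then \<omega>0 else if t < tt (nd t) then wv (nd t) else uv (nd t))"
definition pw :: "nat \<Rightarrow> real" where "pw i = (if i = 1 then \<omega>0 else uv (i - 1))"

lemma dl_bounds: assumes "1 \<le> i" shows "tt (i - 1) < dl i" "dl i < tt i"
proof -
  have "tt (i - 1) < tt i" using assms by (intro tt_less) simp
  then show "tt (i - 1) < dl i" "dl i < tt i" by (auto simp: dl_def)
qed

lemma dl_sm: "strict_mono dl"
proof (rule strict_monoI_Suc)
  fix i
  show "dl i < dl (Suc i)"
  proof (cases i)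
    case 0 then show ?thesis using tt_less[of 0 1] by (simp add: dl_def)
  next
    case (Suc j)
    then show ?thesis using tt_less[of j "Suc j"] tt_less[of "Suc j" "Suc (Suc j)"] by (simp add: dl_def)
  qed
qed

lemma nd_eq: assumes "k < m" "k = 0 \<or> dl k \<le> t" "Suc k = m \<or> t < dl (Suc k)" shows "nd t = k"
  unfolding nd_def using cnt_eq[OF dl_sm assms] .

lemma nd_le: "nd t < m"
proof -
  have "nd t \<le> card {1..<m}" unfolding nd_def by (rule card_mono) auto
  then show ?thesis using A1(1) by simp
qed

lemma om0: "om 0 = \<omega>0"
proof -
  have "dl 1 > 0" using dl_bounds[of 1] tt_nonneg[of 0] by simp
  then have "nd 0 = 0" using A1(1) by (intro nd_eq) auto
  then show ?thesis by (simp add: om_def)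
qed

lemma dl_pos: "1 \<le> k \<Longrightarrow> 0 < dl k"
  using dl_bounds(1)[of k] tt_nonneg[of "k - 1"] by simp

lemma om_drv:
  assumes k: "k \<in> {1..<m}"
  shows "om (dl k) = wv k" "left_val om (dl k) (pw k)"
proof -
  have k1: "1 \<le> k" "k < m" using k by auto
  have ndk: "nd (dl k) = k" using k1 dl_sm by (intro nd_eq) (auto simp: strict_mono_less)
  then show "om (dl k) = wv k" using dl_bounds[OF k1(1)] k1 by (simp add: om_def)
  show "left_val om (dl k) (pw k)"
    unfolding left_val_def
  proof (intro exI[of _ "dl k - tt (k - 1)"] conjI ballI)
    show "0 < dl k - tt (k - 1)" using dl_bounds[OF k1(1)] by simp
    fix u assume u: "u \<in> {dl k - (dl k - tt (k - 1))<..<dl k}"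
    then have u1: "tt (k - 1) < u" "u < dl k" by auto
    show "om u = pw k"
    proof (cases "k = 1")
      case True
      then have "nd u = 0" using u1 A1(1) by (intro nd_eq) auto
      then show ?thesis using True by (simp add: om_def pw_def)
    next
      case False
      then have k2: "1 \<le> k - 1" "Suc (k - 1) = k" "k - 1 < m" using k1 by auto
      have "dl (k - 1) \<le> u" using dl_bounds(2)[OF k2(1)] u1 by simp
      then have "nd u = k - 1" using u1 k2 by (intro nd_eq) auto
      moreover have "\<not> u < tt (k - 1)" using u1 by simp
      moreover have "k - 1 \<noteq> 0" using k2 by simp
      ultimately show ?thesis using False by (simp add: om_def pw_def)
    qed
  qed
qed

lemma om_P:
  assumes k: "k \<in> DI"
  shows "om (tt k) = cv k" "left_val om (tt k) (wv k)"
proof -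
  have k1: "1 \<le> k" "k < m" "onD k" using k by (auto simp: DI_def)
  have a: "dl k \<le> tt k" using dl_bounds(2)[OF k1(1)] by simp
  have b: "Suc k = m \<or> tt k < dl (Suc k)" using dl_bounds(1)[of "Suc k"] by simp
  have "nd (tt k) = k" using k1 a b by (intro nd_eq) auto
  then show "om (tt k) = cv k" using k1 by (simp add: om_def uv_def)
  show "left_val om (tt k) (wv k)"
    unfolding left_val_def
  proof (intro exI[of _ "tt k - dl k"] conjI ballI)
    show "0 < tt k - dl k" using dl_bounds(2)[OF k1(1)] by simp
    fix u assume u: "u \<in> {tt k - (tt k - dl k)<..<tt k}"
    then have u1: "dl k < u" "u < tt k" by auto
    have "Suc k = m \<or> u < dl (Suc k)" using b u1 by auto
    then have "nd u = k" using k1 u1 by (intro nd_eq) auto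
    then show "om u = wv k" using u1 k1 by (simp add: om_def)
  qed
qed

lemma om_const:
  assumes st: "s1 \<le> t" and nj: "(tt ` DI \<union> dl ` {1..<m}) \<inter> {s1<..t} = {}"
  shows "om t = om s1"
proof -
  let ?A = "{i\<in>{1..<m}. dl i \<le> s1}" and ?B = "{i\<in>{1..<m}. dl i \<le> t}"
  have AB: "?A \<subseteq> ?B" using st by auto
  have "?A = ?B"
  proof (rule ccontr)
    assume "?A \<noteq> ?B"
    then obtain i where "i \<in> ?B" "i \<notin> ?A" using AB by blast
    then have "dl i \<in> (tt ` DI \<union> dl ` {1..<m}) \<inter> {s1<..t}" by auto
    then show False using nj by blast
  qed
  then have ndq: "nd t = nd s1" by (simp add: nd_def)
  show ?thesis
  proof (cases "nd t = 0")
    case True then show ?thesis using ndq by (simp add: om_def)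
  next
    case False
    let ?k = "nd t"
    have k: "?k \<in> {1..<m}" using False nd_le[of t] by auto
    show ?thesis
    proof (cases "s1 < tt ?k \<and> \<not> t < tt ?k")
      case True
      have "\<not> onD ?k"
      proof
        assume "onD ?k"
        then have "?k \<in> DI" using k by (simp add: DI_def)
        then have "tt ?k \<in> (tt ` DI \<union> dl ` {1..<m}) \<inter> {s1<..t}" using True by auto
        then show False using nj by blast
      qed
      then show ?thesis using ndq False True by (simp add: om_def uv_def)
    next
      case False
      then have "(s1 < tt ?k) = (t < tt ?k)" using st by auto
      then show ?thesis using ndq by (simp add: om_def)
    qed
  qed
qed

lemma P_cell: "i \<le> m \<Longrightarrow> P i \<in> cell G"
  using A2(2) s_range[of i] by (auto simp: P_def)

lemma cell_box: "x \<in> cell G \<Longrightarrow> x \<in> box G"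
  by (simp add: cell_def)

lemma P_notcorner: "i \<le> m \<Longrightarrow> P i \<notin> corners G"
  using A7 s_range[of i] by (auto simp: P_def)

lemma wall_ok:
  assumes i: "i \<in> JI - DI"
  shows "wall_rule G (P i) (V (i - 1)) (V i)"
proof -
  have i1: "0 < i" "i < m" "\<not> onD i" "V i \<noteq> V (i - 1)" using i by (auto simp: JI_def DI_def)
  have si: "Suc (i - 1) = i" "i - 1 < m" using i1 by auto
  let ?k = "arck i" and ?q = "P i"
  have ak: "?k \<in> {1..nb G}" "?q \<in> arc G ?k" using arc_of i1 by auto
  have ca: "crad G ?k > 0" "arc G ?k \<subseteq> sphere (ctr G ?k) (crad G ?k)"
    "\<forall>q\<in>arc G ?k. \<exists>e>0. ball q e \<inter> box G \<inter> ball (ctr G ?k) (crad G ?k) = {}"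
    using cg_arcs[OF cg] ak(1) by auto
  obtain e where e: "e > 0" "ball ?q e \<inter> box G \<inter> ball (ctr G ?k) (crad G ?k) = {}"
    using ca(3) ak(2) by blast
  have dq: "dist (ctr G ?k) ?q = crad G ?k" using ca(2) ak(2) by auto
  have disp: "d (i - 1) \<bullet> (ctr G ?k - ?q) \<ge> 0"
  proof (rule ccontr)
    assume "\<not> d (i - 1) \<bullet> (ctr G ?k - ?q) \<ge> 0"
    then have pos: "d (i - 1) \<bullet> (?q - ctr G ?k) > 0"
      by (simp add: inner_diff_right)
    obtain h where h: "0 < h" "h \<le> 1" "h * norm (d (i - 1)) < e" "?q - h *\<^sub>R d (i - 1) \<in> ball (ctr G ?k) (crad G ?k)"
      using ball_escape[OF dq pos e(1)] by blast
    have eq: "?q - h *\<^sub>R d (i - 1) = P (i - 1) + (1 - h) *\<^sub>R d (i - 1)"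
      using P_suc[of "i - 1"] si by (simp add: algebra_simps)
    have "?q - h *\<^sub>R d (i - 1) \<in> box G" unfolding eq using segpt si h cell_box by simp
    moreover have "?q - h *\<^sub>R d (i - 1) \<in> ball ?q e" using h by (simp add: dist_norm)
    ultimately show False using e h by blast
  qed
  obtain \<kappa> where k: "\<kappa> > 0" "V (i - 1) = \<kappa> *\<^sub>R d (i - 1)" using kap si by blast
  let ?n = "(1 / crad G ?k) *\<^sub>R (ctr G ?k - ?q)"
  have nv: "nv i = ?n" by (simp add: nv_def)
  have Vi: "V i = reflect ?n (V (i - 1))"
    using V.simps(2)[of "i - 1"] si i1 nv by simp
  have ge: "V (i - 1) \<bullet> ?n \<ge> 0" using k disp ca(1) by simp
  have neq: "V (i - 1) \<bullet> ?n \<noteq> 0"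
  proof
    assume "V (i - 1) \<bullet> ?n = 0"
    then have "reflect ?n (V (i - 1)) = V (i - 1)" by (simp add: reflect_def)
    then show False using Vi i1 by simp
  qed
  have gt: "V (i - 1) \<bullet> ?n > 0" using ge neq by linarith
  show ?thesis unfolding wall_rule_def Let_def
    using P_notcorner[of i] i1 ak gt Vi by auto
qed

lemma disk_ok:
  assumes i: "i \<in> DI"
  shows "disk_rule G (P i) (V (i - 1)) (V i) (wv i) (cv i)"
proof -
  have i1: "0 < i" "i < m" "onD i" using i by (auto simp: DI_def)
  have si: "Suc (i - 1) = i" "i - 1 < m" using i1 by auto
  let ?q = "P i" and ?c = "dctr G" and ?r = "rd G"
  let ?en = "disk_en G ?q" and ?et = "disk_et G ?q"
  have r: "?r > 0" using cg_basic[OF cg] by simp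
  have sph: "?q \<in> sphere ?c ?r" using i1 by (simp add: onD_def)
  have di: "d (i - 1) \<bullet> (?q - ?c) < 0" "d i \<bullet> (?q - ?c) > 0" using disk_in[OF i1] by auto
  obtain \<kappa> where k: "\<kappa> > 0" "V (i - 1) = \<kappa> *\<^sub>R d (i - 1)" using kap si by blast
  have a: "V (i - 1) \<bullet> ?en = \<kappa> * (- (d (i - 1) \<bullet> (?q - ?c)) / ?r)"
    by (simp only: k(2)) (simp add: en_eq inner_minus_right)
  have "\<kappa> * (- (d (i - 1) \<bullet> (?q - ?c)) / ?r) > 0" using di k r by (intro mult_pos_pos divide_pos_pos) auto
  then have vn: "V (i - 1) \<bullet> ?en > 0" using a by linarith
  have b: "d i \<bullet> ?en = - (d i \<bullet> (?q - ?c)) / ?r" by (simp add: en_eq inner_minus_right)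
  have dn: "d i \<bullet> ?en \<noteq> 0" using b di r by simp
  have Vi: "V i = ((V (i - 1) \<bullet> ?en) / (- (d i \<bullet> ?en))) *\<^sub>R d i"
    using V.simps(2)[of "i - 1"] si i1 by simp
  have "V i \<bullet> ?en = - (V (i - 1) \<bullet> ?en)" using dn by (simp add: Vi)
  moreover have "V i = (V i \<bullet> ?en) *\<^sub>R ?en + (V i \<bullet> ?et) *\<^sub>R ?et"
    using disk_decomp[of G ?q "V i"] sph r by simp
  ultimately have "V i = (- (V (i - 1) \<bullet> ?en)) *\<^sub>R ?en + wv i *\<^sub>R ?et"
    by (simp add: wv_def)
  then show ?thesis unfolding disk_rule_def using sph vn by (simp add: cv_def)
qed

lemma exit_ok:
  assumes op: "\<gamma> 1 \<in> openings G"
  shows "(\<gamma> 1 \<in> openL G \<and> fst (V (m - 1)) < 0) \<or> (\<gamma> 1 \<in> openR G \<and> fst (V (m - 1)) > 0)"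
proof -
  define j where "j = m - 1"
  have j: "j < m" "Suc j = m" using A1(1) by (auto simp: j_def)
  let ?p = "P j" and ?d = "d j" and ?L = "Lw G"
  have g1: "\<gamma> 1 = ?p + ?d" using j A1(3) P_suc[of j] by (simp add: P_def)
  have dn: "?d \<noteq> 0" using d_nz j by simp
  obtain \<kappa> where k: "\<kappa> > 0" "V j = \<kappa> *\<^sub>R ?d" using kap j by blast
  have pbox: "?p \<in> box G" using P_cell[of j] j cell_box by simp
  have px: "0 \<le> fst ?p" "fst ?p \<le> ?L" using cg_basic(9)[OF cg, of "fst ?p" "snd ?p"] pbox by auto
  have X: "fst (\<gamma> 1) = 0 \<or> fst (\<gamma> 1) = ?L" using op by (auto simp: openings_def openL_def openR_def)
  have nv: "fst ?d \<noteq> 0"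
  proof
    assume fd: "fst ?d = 0"
    define U where "U = (\<Union>k\<in>{1..nb G}. arc G k)"
    define f where "f h = ?p + h *\<^sub>R ?d" for h :: real
    have fx: "fst (f h) = fst (\<gamma> 1)" for h using fd g1 by (simp add: f_def)
    have inU: "f h \<in> U" if h: "h \<in> {0<..<1}" for h
    proof -
      have hb: "0 \<le> h" "h \<le> 1" using h by auto
      have fb: "f h \<in> box G" using segpt[OF j(1) hb] cell_box by (simp add: f_def)
      have nint: "f h \<notin> interior (box G)"
      proof
        assume "f h \<in> interior (box G)"
        then obtain e where e: "e > 0" "ball (f h) e \<subseteq> box G" by (meson mem_interior)
        define w where "w = f h + ((if fst (\<gamma> 1) = 0 then - (e / 2) else e / 2), 0)"
        have "dist (f h) w < e" using e by (simp add: w_def dist_norm)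
        then have "w \<in> box G" using e by auto
        then have "0 \<le> fst w \<and> fst w \<le> ?L" using cg_basic(9)[OF cg, of "fst w" "snd w"] by simp
        then show False using X e fx[of h] by (auto simp: w_def split: if_splits)
      qed
      have "f h \<in> frontier (box G)"
        using fb nint cg_basic(4)[OF cg] by (simp add: frontier_def)
      moreover have "f h \<notin> openings G"
      proof -
        have hy: "h \<in> {0..1}" using hb by simp
        have fg: "\<gamma> (mu j h) = f h" using mu_facts(3)[OF j(1) hy] by (simp add: f_def)
        have mr: "mu j h \<in> {s j..s (Suc j)}" using mu_facts(2)[OF j(1) hy] .
        have "mu j h \<noteq> 0"
        proof
          assume m0: "mu j h = 0"
          then have "s j \<le> 0" using mr by simp
          then have "j = 0" using s_strict[of 0 j] A1(2) j by (cases "j = 0") auto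
          then have "f h = ?p" using fg m0 A1(2) by (simp add: P_def)
          then show False using dn h by (simp add: f_def)
        qed
        moreover have "mu j h \<noteq> 1"
        proof
          assume "mu j h = 1"
          then have "f h = ?p + ?d" using fg g1 by simp
          then have "(1 - h) *\<^sub>R ?d = 0" by (simp add: f_def algebra_simps)
          then show False using dn h by simp
        qed
        moreover have "0 \<le> mu j h" "mu j h \<le> 1" using mr s_range[of j] s_range[of "Suc j"] j by auto
        ultimately have "mu j h \<in> {0<..<1}" by auto
        then have "\<gamma> (mu j h) \<notin> openings G" using A6 by blast
        then show ?thesis using fg by simp
      qed
      ultimately show "f h \<in> U" using cg_front[OF cg] by (auto simp: U_def openings_def)
    qed
    have cU: "closed U" unfolding U_def
      by (rule compact_imp_closed, rule compact_UN) (use cg_arcs[OF cg] in auto)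
    have ev: "\<forall>\<^sub>F h in at_left 1. f h \<in> U"
      using eventually_at_left_real[of 0 "1::real"] by (rule eventually_mono) (use inU in auto)
    have lim: "(f \<longlongrightarrow> \<gamma> 1) (at_left 1)"
    proof -
      have "(f \<longlongrightarrow> f 1) (at_left 1)" unfolding f_def by (intro tendsto_intros)
      then show ?thesis using g1 by (simp add: f_def)
    qed
    have "\<gamma> 1 \<in> U" using Lim_in_closed_set[OF cU ev trivial_limit_at_left_real lim] .
    then obtain k where kk: "k \<in> {1..nb G}" "\<gamma> 1 \<in> arc G k" by (auto simp: U_def)
    have pk: "piece G k = arc G k" using kk by (auto simp: piece_def)
    have "\<gamma> 1 \<in> corners G"
    proof (cases "\<gamma> 1 \<in> openL G")
      case True
      then have "\<gamma> 1 \<in> piece G 0" by (simp add: piece_def)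
      then show ?thesis unfolding corners_def using kk pk
        by (intro CollectI exI[of _ 0] exI[of _ k]) auto
    next
      case False
      then have "\<gamma> 1 \<in> openR G" using op by (simp add: openings_def)
      then have "\<gamma> 1 \<in> piece G (Suc (nb G))" by (simp add: piece_def)
      then show ?thesis unfolding corners_def using kk pk
        by (intro CollectI exI[of _ "Suc (nb G)"] exI[of _ k]) auto
    qed
    then show False using A7 by auto
  qed
  have "fst (V j) = \<kappa> * fst ?d" using k by simp
  moreover have "fst ?d = fst (\<gamma> 1) - fst ?p" using g1 by simp
  ultimately show ?thesis
  proof -
    assume a: "fst (V j) = \<kappa> * fst ?d" and b: "fst ?d = fst (\<gamma> 1) - fst ?p"
    show ?thesis
    proof (cases "\<gamma> 1 \<in> openL G")
      case True
      then have "fst (\<gamma> 1) = 0" by (auto simp: openL_def)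
      then have "fst ?d < 0" using b px nv by linarith
      then have "fst (V j) < 0" using a k by (simp add: mult_pos_neg)
      then show ?thesis using True j_def by simp
    next
      case False
      then have R: "\<gamma> 1 \<in> openR G" using op by (simp add: openings_def)
      then have "fst (\<gamma> 1) = ?L" by (auto simp: openR_def)
      then have "fst ?d > 0" using b px nv by linarith
      then have "fst (V j) > 0" using a k by simp
      then show ?thesis using R j_def by simp
    qed
  qed
qed

lemma lv_vel: assumes "1 \<le> i" "i \<le> m" shows "left_val velf (tt i) (V (i - 1))"
  unfolding left_val_def
proof (intro exI[of _ "tt i - tt (i - 1)"] conjI ballI)
  show "0 < tt i - tt (i - 1)" using tt_less[of "i - 1" i] assms by simp
  fix u assume u: "u \<in> {tt i - (tt i - tt (i - 1))<..<tt i}"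
  have "idx u = i - 1" using u assms by (intro idx_eq) auto
  then show "velf u = V (i - 1)" by (simp add: velf_def)
qed

lemma vel_tt: assumes "i < m" shows "velf (tt i) = V i"
proof -
  have "idx (tt i) = i" using assms tt_less[of i "Suc i"] by (intro idx_eq) auto
  then show ?thesis by (simp add: velf_def)
qed

lemma dl_not_tt: assumes "1 \<le> j" shows "dl j \<noteq> tt l"
proof
  assume e: "dl j = tt l"
  have "tt (j - 1) < tt l" "tt l < tt j" using dl_bounds[OF assms] e by auto
  then have "j - 1 < l" "l < j" using tt_sm by (auto simp: strict_mono_less)
  then show False by simp
qed

definition TT :: real where "TT = (if \<gamma> 1 \<in> openings G then Tf + 1 else Tf)"

definition P0 :: ptraj where
  "P0 = \<lparr>t_in = 0, t_out = Tf, pos = posf, vel = velf, jumps = tt ` JI, djumps = tt ` DI\<rparr>"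

definition drv :: "nat \<Rightarrow> ptraj" where
  "drv k = (SOME D. traj_ok G TT om D \<and> injected G D \<and> driver G TT D \<and> djumps D = {dl k})"

definition Ds :: "ptraj list" where "Ds = map drv [1..<m]"

lemma TT_ge: "Tf \<le> TT" by (simp add: TT_def)

lemma drv_prop:
  assumes k: "k \<in> {1..<m}"
  shows "traj_ok G TT om (drv k) \<and> injected G (drv k) \<and> driver G TT (drv k) \<and> djumps (drv k) = {dl k}"
proof -
  have k1: "1 \<le> k" "k < m" using k by auto
  have "dl k < tt k" using dl_bounds k1 by simp
  also have "tt k \<le> Tf" unfolding Tf_def using k1 by (intro tt_le) simp
  finally have "dl k < TT" using TT_ge by simp
  then have "\<exists>D. traj_ok G TT om D \<and> injected G D \<and> driver G TT D \<and> djumps D = {dl k}"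
    using driver_exists[OF cg dl_pos[OF k1(1)] _ om_drv(2)[OF k] om_drv(1)[OF k]] by blast
  then show ?thesis unfolding drv_def by (rule someI_ex)
qed

lemma P0_traj: "traj_ok G TT om P0"
  unfolding traj_ok_def P0_def ptraj.simps
proof (intro conjI)
  show "0 \<le> (0::real)" by simp
  show "0 \<le> Tf" using Tf_pos by simp
  show "Tf \<le> TT" by (rule TT_ge)
  show "finite (tt ` JI)" by (simp add: JI_def)
  show "tt ` JI \<subseteq> {0<..<Tf}"
  proof
    fix x assume "x \<in> tt ` JI"
    then obtain i where i: "i \<in> {1..<m}" "x = tt i" by (auto simp: JI_def)
    then show "x \<in> {0<..<Tf}" using tt_less[of 0 i] tt_less[of i m] by (auto simp: Tf_def)
  qed
  show "tt ` DI \<subseteq> tt ` JI" using DI_JI by auto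
  show "\<forall>t\<in>{0..Tf}. posf t \<in> cell G" using sig_range A2(2) by (auto simp: posf_def)
  show "\<forall>s t. 0 \<le> s \<and> s \<le> t \<and> t \<le> Tf \<and> tt ` JI \<inter> {s<..<t} = {} \<longrightarrow> posf t = posf s + (t - s) *\<^sub>R velf s"
    using ff_pos by blast
  show "\<forall>s t. 0 \<le> s \<and> s \<le> t \<and> t < Tf \<and> tt ` JI \<inter> {s<..t} = {} \<longrightarrow> velf t = velf s"
    using ff_vel by blast
  show "\<forall>\<tau>\<in>tt ` JI - tt ` DI. \<exists>vm. left_val velf \<tau> vm \<and> wall_rule G (posf \<tau>) vm (velf \<tau>)"
  proof
    fix \<tau> assume "\<tau> \<in> tt ` JI - tt ` DI"
    then obtain i where i: "i \<in> JI" "i \<notin> DI" "\<tau> = tt i" by auto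
    have i1: "1 \<le> i" "i < m" using i by (auto simp: JI_def)
    have W: "wall_rule G (posf \<tau>) (V (i - 1)) (velf \<tau>)"
      using wall_ok[of i] i i1 posf_tt vel_tt by simp
    have "left_val velf \<tau> (V (i - 1))" using lv_vel[of i] i1 i(3) by simp
    then show "\<exists>vm. left_val velf \<tau> vm \<and> wall_rule G (posf \<tau>) vm (velf \<tau>)"
      using W by blast
  qed
  show "\<forall>\<tau>\<in>tt ` DI. \<exists>vm wm. left_val velf \<tau> vm \<and> left_val om \<tau> wm \<and>
        disk_rule G (posf \<tau>) vm (velf \<tau>) wm (om \<tau>)"
  proof
    fix \<tau> assume "\<tau> \<in> tt ` DI"
    then obtain i where i: "i \<in> DI" "\<tau> = tt i" by auto
    have i1: "1 \<le> i" "i < m" using i by (auto simp: DI_def)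
    have W: "disk_rule G (posf \<tau>) (V (i - 1)) (velf \<tau>) (wv i) (om \<tau>)"
      using disk_ok[of i] i i1 posf_tt vel_tt om_P(1) by simp
    have "left_val velf \<tau> (V (i - 1))" using lv_vel[of i] i1 i(2) by simp
    moreover have "left_val om \<tau> (wv i)" using om_P(2)[of i] i by simp
    ultimately show "\<exists>vm wm. left_val velf \<tau> vm \<and> left_val om \<tau> wm \<and>
        disk_rule G (posf \<tau>) vm (velf \<tau>) wm (om \<tau>)"
      using W by blast
  qed
  show "Tf < TT \<longrightarrow> 0 < Tf \<and> (\<exists>vm. left_val velf Tf vm \<and>
        (posf Tf \<in> openL G \<and> fst vm < 0 \<or> posf Tf \<in> openR G \<and> 0 < fst vm))"
  proof
    assume "Tf < TT"
    then have op: "\<gamma> 1 \<in> openings G" by (simp add: TT_def split: if_splits)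
    have "posf Tf = \<gamma> 1" by (simp add: posf_def sigTf)
    moreover have "left_val velf Tf (V (m - 1))" using lv_vel[of m] A1(1) by (simp add: Tf_def)
    ultimately show "0 < Tf \<and> (\<exists>vm. left_val velf Tf vm \<and>
        (posf Tf \<in> openL G \<and> fst vm < 0 \<or> posf Tf \<in> openR G \<and> 0 < fst vm))"
      using exit_ok[OF op] Tf_pos by (intro conjI exI[of _ "V (m - 1)"]) auto
  qed
qed

lemma len_Ps: "length (P0 # Ds) = m" using A1(1) by (simp add: Ds_def)

lemma nth_Ps: assumes "i < m"
  shows "djumps ((P0 # Ds) ! i) = (if i = 0 then tt ` DI else {dl i})"
proof (cases i)
  case 0 then show ?thesis by (simp add: P0_def)
next
  case (Suc j)
  then have j: "j < m - 1" using assms by simp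
  have "(P0 # Ds) ! i = drv (1 + j)" using Suc j by (simp add: Ds_def)
  then show ?thesis using drv_prop[of i] Suc assms by simp
qed

lemma evo: "evolution G TT om P0 Ds"
  unfolding evolution_def Let_def
proof (intro conjI)
  show "traj_ok G TT om P0" by (rule P0_traj)
  show "\<forall>D\<in>set Ds. traj_ok G TT om D \<and> injected G D"
    using drv_prop by (auto simp: Ds_def)
  show "\<forall>i<length (P0 # Ds). \<forall>j<length (P0 # Ds). i \<noteq> j \<longrightarrow>
          djumps ((P0 # Ds) ! i) \<inter> djumps ((P0 # Ds) ! j) = {}"
  proof (intro allI impI)
    fix i j assume ij: "i < length (P0 # Ds)" "j < length (P0 # Ds)" "i \<noteq> j"
    then have ij': "i < m" "j < m" using len_Ps by auto
    show "djumps ((P0 # Ds) ! i) \<inter> djumps ((P0 # Ds) ! j) = {}"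
    proof (cases "i = 0")
      case True
      then have "j \<noteq> 0" using ij by simp
      then show ?thesis using nth_Ps[OF ij'(1)] nth_Ps[OF ij'(2)] True dl_not_tt[of j] by auto
    next
      case False
      show ?thesis
      proof (cases "j = 0")
        case True
        then show ?thesis using nth_Ps[OF ij'(1)] nth_Ps[OF ij'(2)] False dl_not_tt[of i] by auto
      next
        case False2: False
        have "dl i \<noteq> dl j" using dl_sm ij(3) by (simp add: strict_mono_eq)
        then show ?thesis using nth_Ps[OF ij'(1)] nth_Ps[OF ij'(2)] False False2 by auto
      qed
    qed
  qed
  show "\<forall>s t. 0 \<le> s \<and> s \<le> t \<and> t \<le> TT \<and> (\<Union>P\<in>set (P0 # Ds). djumps P) \<inter> {s<..t} = {} \<longrightarrow> om t = om s"
  proof (intro allI impI)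
    fix s1 t assume h: "0 \<le> s1 \<and> s1 \<le> t \<and> t \<le> TT \<and> (\<Union>P\<in>set (P0 # Ds). djumps P) \<inter> {s1<..t} = {}"
    have sub: "tt ` DI \<union> dl ` {1..<m} \<subseteq> (\<Union>P\<in>set (P0 # Ds). djumps P)"
    proof
      fix x assume "x \<in> tt ` DI \<union> dl ` {1..<m}"
      then show "x \<in> (\<Union>P\<in>set (P0 # Ds). djumps P)"
      proof
        assume "x \<in> tt ` DI" then show ?thesis by (auto simp: P0_def)
      next
        assume "x \<in> dl ` {1..<m}"
        then obtain k where k: "k \<in> {1..<m}" "x = dl k" by auto
        have "drv k \<in> set Ds" using k by (auto simp: Ds_def)
        moreover have "x \<in> djumps (drv k)" using drv_prop[OF k(1)] k by simp
        ultimately show ?thesis by auto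
      qed
    qed
    have "(tt ` DI \<union> dl ` {1..<m}) \<inter> {s1<..t} = {}" using h sub by blast
    then show "om t = om s1" using om_const h by blast
  qed
qed

lemma main:
  "\<exists>T \<omega> Q Es Tq. evolution G T \<omega> Q Es \<and> \<omega> 0 = \<omega>0 \<and>
           t_in Q = 0 \<and> pos Q 0 = \<gamma> 0 \<and> vel Q 0 = \<mu> *\<^sub>R (\<gamma> (s 1) - \<gamma> (s 0)) \<and>
           (\<forall>D\<in>set Es. driver G T D) \<and>
           follows Q \<gamma> Tq \<and>
           (\<gamma> 1 \<in> openings G \<longrightarrow> t_out Q = Tq \<and> Tq < T)"
proof (rule exI[of _ TT], rule exI[of _ om], rule exI[of _ P0], rule exI[of _ Ds], rule exI[of _ Tf], intro conjI)
  show "evolution G TT om P0 Ds" by (rule evo)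
  show "om 0 = \<omega>0" by (rule om0)
  show "t_in P0 = 0" by (simp add: P0_def)
  show "pos P0 0 = \<gamma> 0" using sig0 by (simp add: P0_def posf_def)
  have "idx 0 = 0" using A1(1) tt_less[of 0 1] by (intro idx_eq) auto
  then show "vel P0 0 = \<mu> *\<^sub>R (\<gamma> (s 1) - \<gamma> (s 0))"
    by (simp add: P0_def velf_def d_def P_def)
  show "\<forall>D\<in>set Ds. driver G TT D" using drv_prop by (auto simp: Ds_def)
  show "follows P0 \<gamma> Tf"
    unfolding follows_def
  proof (intro conjI exI[of _ sig])
    show "0 \<le> Tf" using Tf_pos by simp
    show "Tf \<le> t_out P0" by (simp add: P0_def)
    show "continuous_on {0..Tf} sig" by (rule sig_cont)
    show "mono_on {0..Tf} sig" by (rule sig_mono)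
    show "sig 0 = 0" by (rule sig0)
    show "sig Tf = 1" by (rule sigTf)
    show "\<forall>t\<in>{0..Tf}. pos P0 t = \<gamma> (sig t)" by (simp add: P0_def posf_def)
  qed
  show "\<gamma> 1 \<in> openings G \<longrightarrow> t_out P0 = Tf \<and> Tf < TT" by (simp add: P0_def TT_def)
qed

end

theorem proposition1:
  fixes G :: cellgeom and \<gamma> :: "real \<Rightarrow> pt" and m :: nat and s :: "nat \<Rightarrow> real"
    and v0 :: pt and \<mu> :: real and \<omega>0 :: real
  assumes "cell_geometry G"
    and "admissible_path G \<gamma> m s"
    and "\<mu> > 0" and "v0 = \<mu> *\<^sub>R (\<gamma> (s 1) - \<gamma> (s 0))"
  shows "\<exists>T \<omega> P0 Ds Tf.
           evolution G T \<omega> P0 Ds \<and> \<omega> 0 = \<omega>0 \<and>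
           t_in P0 = 0 \<and> pos P0 0 = \<gamma> 0 \<and> vel P0 0 = v0 \<and>
           (\<forall>D\<in>set Ds. driver G T D) \<and>
           follows P0 \<gamma> Tf \<and>
           (\<gamma> 1 \<in> openings G \<longrightarrow> t_out P0 = Tf \<and> Tf < T)"
proof -
  interpret pf G \<gamma> m s \<mu> \<omega>0 using assms(1-3) by unfold_locales
  show ?thesis using main assms(4) by simp
qed

end
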